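(* Suppose $p=p(n)$ satisfies $n^{-2}\ll1-p\le(D+o(1))/n$ for some constant $D\in(0,\infty)$, and set $q:=1-p$. Let $\varepsilon>0$ and let $\omega=\omega(n)\to\infty$ as $n\to\infty$. Then: (i) there is an interval of length $\lfloor\omega n\sqrt{q}\rfloor$ that contains $\chi(G_{n,p})$ with high probability; (ii) there is a constant $c=c(\varepsilon,D)>0$ such that no interval of length $\lfloor cn\sqrt{q}\rfloor$ contains $\chi(G_{n,p})$ with probability at least $\varepsilon+o(1)$, i.e., for every sequence of intervals $I_n$ of length $\lfloor cn\sqrt q\rfloor$ one has $\Pr(\chi(G_{n,p})\in I_n)\le\varepsilon+o(1)$.
   Context: $G_{n,p}$ denotes the binomial random graph on vertex set $[n]$ in which each pair of vertices is an edge independently with probability $p$; $\chi$ denotes the chromatic number. For positive functions, $a\ll b$ means $a/b\to0$ as $n\to\infty$; $o(1)$ denotes a quantity tending to $0$ as $n\to\infty$. "With high probability" means with probability tending to $1$. "There is an interval of length $\ell(n)$ that contains $\chi(G_{n,p})$ with high probability" means there exist intervals $I_n$ of length $\ell(n)$ with $\Pr(\chi(G_{n,p})\in I_n)\to1$. *)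

theory Defs
  imports "HOL-Probability.Probability"
begin

text \<open>Graphs on vertex set {0..<n}: a graph is a predicate E on pairs (i,j) with i<j<n
  (the value of E outside such pairs is irrelevant / fixed to False).\<close>

definition vertex_pairs :: "nat \<Rightarrow> (nat \<times> nat) set" where
  "vertex_pairs n = {(i, j). i < j \<and> j < n}"

definition Gnp :: "nat \<Rightarrow> real \<Rightarrow> (nat \<times> nat \<Rightarrow> bool) pmf" where
  "Gnp n p = Pi_pmf (vertex_pairs n) False (\<lambda>_. bernoulli_pmf p)"

definition proper_colouring :: "nat \<Rightarrow> (nat \<times> nat \<Rightarrow> bool) \<Rightarrow> nat \<Rightarrow> (nat \<Rightarrow> nat) \<Rightarrow> bool" where
  "proper_colouring n E k f \<longleftrightarrow>
     (\<forall>i<n. f i < k) \<and> (\<forall>i j. i < j \<and> j < n \<and> E (i, j) \<longrightarrow> f i \<noteq> f j)"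

definition chromatic_number :: "nat \<Rightarrow> (nat \<times> nat \<Rightarrow> bool) \<Rightarrow> nat" where
  "chromatic_number n E = (LEAST k. \<exists>f. proper_colouring n E k f)"

definition chi_prob :: "nat \<Rightarrow> real \<Rightarrow> nat set \<Rightarrow> real" where
  "chi_prob n p S = measure_pmf.prob (Gnp n p) {E. chromatic_number n E \<in> S}"

definition edge_prob_regime :: "real \<Rightarrow> (nat \<Rightarrow> real) \<Rightarrow> bool" where
  "edge_prob_regime D p \<longleftrightarrow>
     (\<forall>n. 0 \<le> p n \<and> p n \<le> 1) \<and>
     filterlim (\<lambda>n. real n ^ 2 * (1 - p n)) at_top sequentially \<and>
     (\<exists>e. e \<longlonglongrightarrow> 0 \<and> (\<forall>\<^sub>F n in sequentially. 1 - p n \<le> (D + e n) / real n))"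

end

theory Submission
  imports Defs
begin


lemma finite_set_Pi_bern: "finite A \<Longrightarrow> finite (set_pmf (Pi_pmf A False (\<lambda>_. bernoulli_pmf p)))"
proof -
  assume A: "finite A"
  have "set_pmf (Pi_pmf A False (\<lambda>_. bernoulli_pmf p)) \<subseteq> PiE_dflt A False (\<lambda>_. UNIV)"
    using set_Pi_pmf_subset[OF A, of False "\<lambda>_. bernoulli_pmf p"] by (auto simp: PiE_dflt_def)
  moreover have "finite (PiE_dflt A False (\<lambda>_. (UNIV::bool set)))" using A by auto
  ultimately show ?thesis by (rule finite_subset)
qed

lemma integral_pair_bern:
  fixes h :: "bool \<times> 'a \<Rightarrow> real"
  assumes N: "finite (set_pmf N)" and p: "0 \<le> p" "p \<le> 1"
  shows "(\<integral>x. h x \<partial>pair_pmf (bernoulli_pmf p) N) =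
     p * (\<integral>g. h (True,g) \<partial>N) + (1-p) * (\<integral>g. h (False,g) \<partial>N)"
proof -
  have fin: "finite ((UNIV::bool set) \<times> set_pmf N)" using N by (simp add: finite_cartesian_product)
  have "(\<integral>x. h x \<partial>pair_pmf (bernoulli_pmf p) N) = (\<Sum>a\<in>UNIV \<times> set_pmf N. pmf (pair_pmf (bernoulli_pmf p) N) a *\<^sub>R h a)"
    by (rule integral_measure_pmf[OF fin]) auto
  also have "\<dots> = (\<Sum>b\<in>UNIV. \<Sum>g\<in>set_pmf N. pmf (bernoulli_pmf p) b * pmf N g * h (b,g))"
    apply (subst sum.cartesian_product)
    apply (simp add: case_prod_unfold)
    apply (rule sum.cong, simp)
    apply (case_tac x)
    apply (simp add: pmf_pair)
    done
  also have "\<dots> = p * (\<Sum>g\<in>set_pmf N. pmf N g * h (True,g)) + (1-p) * (\<Sum>g\<in>set_pmf N. pmf N g * h (False,g))"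
    using p by (simp add: UNIV_bool sum_distrib_left mult.assoc)
  also have "(\<Sum>g\<in>set_pmf N. pmf N g * h (True,g)) = (\<integral>g. h (True,g) \<partial>N)"
    by (subst integral_measure_pmf[OF N]) auto
  also have "(\<Sum>g\<in>set_pmf N. pmf N g * h (False,g)) = (\<integral>g. h (False,g) \<partial>N)"
    by (subst integral_measure_pmf[OF N]) auto
  finally show ?thesis .
qed

lemma integral_Pi_insert:
  fixes h :: "('a \<Rightarrow> bool) \<Rightarrow> real"
  assumes A: "finite A" "x \<notin> A" and p: "0 \<le> p" "p \<le> 1"
  shows "(\<integral>g. h g \<partial>Pi_pmf (insert x A) False (\<lambda>_. bernoulli_pmf p)) =
     p * (\<integral>g. h (g(x:=True)) \<partial>Pi_pmf A False (\<lambda>_. bernoulli_pmf p))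
   + (1-p) * (\<integral>g. h (g(x:=False)) \<partial>Pi_pmf A False (\<lambda>_. bernoulli_pmf p))"
  apply (subst Pi_pmf_insert[OF A])
  apply (subst integral_map_pmf)
  apply (subst integral_pair_bern[OF finite_set_Pi_bern[OF A(1)] p])
  apply simp
  done

definition Var_pmf :: "'a pmf \<Rightarrow> ('a \<Rightarrow> real) \<Rightarrow> real" where
  "Var_pmf M f = (\<integral>x. (f x)^2 \<partial>M) - (\<integral>x. f x \<partial>M)^2"

lemma efron_stein:
  fixes f :: "('a \<Rightarrow> bool) \<Rightarrow> real"
  assumes A: "finite A" and p: "0 \<le> p" "p \<le> 1"
    and L: "\<And>g x. x \<in> A \<Longrightarrow> \<bar>f (g(x:=True)) - f (g(x:=False))\<bar> \<le> c"
  shows "Var_pmf (Pi_pmf A False (\<lambda>_. bernoulli_pmf p)) f \<le> real (card A) * (p*(1-p)) * c^2"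
  using A L
proof (induction A arbitrary: f rule: finite_induct)
  case empty
  then show ?case by (simp add: Var_pmf_def)
next
  case (insert x A)
  let ?M = "Pi_pmf A False (\<lambda>_. bernoulli_pmf p)"
  define f1 where "f1 = (\<lambda>g. f (g(x:=True)))"
  define f0 where "f0 = (\<lambda>g. f (g(x:=False)))"
  have L1: "\<bar>f1 (g(y:=True)) - f1 (g(y:=False))\<bar> \<le> c" if "y \<in> A" for g y
  proof -
    have "x \<noteq> y" using insert.hyps that by auto
    then have eqs: "f1 (g(y:=True)) = f ((g(x:=True))(y:=True))" "f1 (g(y:=False)) = f ((g(x:=True))(y:=False))"
      by (auto simp: f1_def fun_upd_twist)
    have "y \<in> insert x A" using that by simp
    from insert.prems[of y "g(x:=True)", OF this] show ?thesis by (simp only: eqs)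
  qed
  have L0: "\<bar>f0 (g(y:=True)) - f0 (g(y:=False))\<bar> \<le> c" if "y \<in> A" for g y
  proof -
    have "x \<noteq> y" using insert.hyps that by auto
    then have eqs: "f0 (g(y:=True)) = f ((g(x:=False))(y:=True))" "f0 (g(y:=False)) = f ((g(x:=False))(y:=False))"
      by (auto simp: f0_def fun_upd_twist)
    have "y \<in> insert x A" using that by simp
    from insert.prems[of y "g(x:=False)", OF this] show ?thesis by (simp only: eqs)
  qed
  have V1: "Var_pmf ?M f1 \<le> real (card A) * (p*(1-p)) * c^2" by (rule insert.IH) (erule L1)
  have V0: "Var_pmf ?M f0 \<le> real (card A) * (p*(1-p)) * c^2" by (rule insert.IH) (erule L0)
  define m1 where "m1 = (\<integral>g. f1 g \<partial>?M)"
  define m0 where "m0 = (\<integral>g. f0 g \<partial>?M)"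
  have int: "integrable ?M h" for h :: "_ \<Rightarrow> real"
    by (rule integrable_measure_pmf_finite[OF finite_set_Pi_bern[OF insert.hyps(1)]])
  have d: "\<bar>m1 - m0\<bar> \<le> c"
  proof -
    have "m1 - m0 = (\<integral>g. f1 g - f0 g \<partial>?M)" unfolding m1_def m0_def
      by (rule Bochner_Integration.integral_diff[symmetric]) (auto intro: int)
    also have "\<bar>\<dots>\<bar> \<le> (\<integral>g. \<bar>f1 g - f0 g\<bar> \<partial>?M)" by (rule integral_abs_bound)
    also have "\<dots> \<le> (\<integral>g. c \<partial>?M)"
      apply (rule integral_mono[OF int int])
      using insert.prems[of x, OF insertI1] unfolding f1_def f0_def by blast
    finally show ?thesis by simp
  qed
  have E1: "(\<integral>g. f g \<partial>Pi_pmf (insert x A) False (\<lambda>_. bernoulli_pmf p)) = p * m1 + (1-p) * m0"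
    unfolding m1_def m0_def f1_def f0_def by (rule integral_Pi_insert[OF insert.hyps p])
  have E2: "(\<integral>g. (f g)^2 \<partial>Pi_pmf (insert x A) False (\<lambda>_. bernoulli_pmf p)) =
       p * (\<integral>g. (f1 g)^2 \<partial>?M) + (1-p) * (\<integral>g. (f0 g)^2 \<partial>?M)"
    unfolding f1_def f0_def by (rule integral_Pi_insert[OF insert.hyps p])
  have "Var_pmf (Pi_pmf (insert x A) False (\<lambda>_. bernoulli_pmf p)) f
      = p * Var_pmf ?M f1 + (1-p) * Var_pmf ?M f0 + p*(1-p)*(m1-m0)^2"
    unfolding Var_pmf_def E1 E2 m1_def[symmetric] m0_def[symmetric] by (simp add: algebra_simps power2_eq_square)
  also have "\<dots> \<le> p * (real (card A) * (p*(1-p)) * c^2) + (1-p) * (real (card A) * (p*(1-p)) * c^2) + p*(1-p)*c^2"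
  proof -
    have "(m1-m0)^2 \<le> c^2" using d by (metis abs_le_square_iff abs_of_nonneg abs_ge_zero order_trans power2_abs abs_le_square_iff)
    then have "p*(1-p)*(m1-m0)^2 \<le> p*(1-p)*c^2" using p by (intro mult_left_mono) auto
    moreover have "p * Var_pmf ?M f1 \<le> p * (real (card A) * (p*(1-p)) * c^2)" using V1 p by (intro mult_left_mono) auto
    moreover have "(1-p) * Var_pmf ?M f0 \<le> (1-p) * (real (card A) * (p*(1-p)) * c^2)" using V0 p by (intro mult_left_mono) auto
    ultimately show ?thesis by linarith
  qed
  also have "\<dots> = real (card (insert x A)) * (p*(1-p)) * c^2"
    using insert.hyps by (simp add: algebra_simps)
  finally show ?case .
qed


definition adj :: "(nat \<times> nat \<Rightarrow> bool) \<Rightarrow> nat \<Rightarrow> nat \<Rightarrow> bool" where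
  "adj e i j = (if i < j then e (i,j) else e (j,i))"

definition universal :: "nat \<Rightarrow> (nat \<times> nat \<Rightarrow> bool) \<Rightarrow> nat \<Rightarrow> bool" where
  "universal n e u \<longleftrightarrow> u < n \<and> (\<forall>x<n. x \<noteq> u \<longrightarrow> adj e u x)"

lemma chi_ex: "\<exists>f. proper_colouring n E (chromatic_number n E) f"
proof -
  have "\<exists>f. proper_colouring n E n f"
    by (rule exI[of _ id]) (auto simp: proper_colouring_def)
  then show ?thesis unfolding chromatic_number_def
    using LeastI_ex[of "\<lambda>k. \<exists>f. proper_colouring n E k f"] by blast
qed

lemma chi_le: "proper_colouring n E k f \<Longrightarrow> chromatic_number n E \<le> k"
  unfolding chromatic_number_def by (rule Least_le) blast

lemma chi_le_n: "chromatic_number n E \<le> n"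
  by (rule chi_le[of _ _ _ id]) (auto simp: proper_colouring_def)

lemma chi_mono:
  assumes "\<And>x. E x \<Longrightarrow> E' x"
  shows "chromatic_number n E \<le> chromatic_number n E'"
proof -
  obtain f where f: "proper_colouring n E' (chromatic_number n E') f" using chi_ex by blast
  then have "proper_colouring n E (chromatic_number n E') f"
    using assms unfolding proper_colouring_def by blast
  then show ?thesis by (rule chi_le)
qed

lemma chi_add_edge: "chromatic_number n (E(x:=True)) \<le> chromatic_number n E + 1"
proof -
  obtain f where f: "proper_colouring n E (chromatic_number n E) f" using chi_ex by blast
  obtain i j where x: "x = (i,j)" by (cases x)
  define k where "k = chromatic_number n E"
  define f' where "f' = f(j := k)"
  have fr: "\<And>i. i < n \<Longrightarrow> f i < k" and fe: "\<And>a b. a < b \<Longrightarrow> b < n \<Longrightarrow> E (a,b) \<Longrightarrow> f a \<noteq> f b"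
    using f unfolding proper_colouring_def k_def by auto
  have "proper_colouring n (E(x:=True)) (k+1) f'"
    unfolding proper_colouring_def
  proof (intro conjI allI impI)
    fix a assume a: "a < n" then show "f' a < k + 1" using fr[OF a] by (auto simp: f'_def)
  next
    fix a b assume ab: "a < b \<and> b < n \<and> (E(x := True)) (a, b)"
    show "f' a \<noteq> f' b"
    proof (cases "(a,b) = x")
      case True
      then have "b = j" "a \<noteq> j" using ab x by auto
      then show ?thesis using fr[of a] ab by (auto simp: f'_def)
    next
      case False
      then have "E (a,b)" using ab by auto
      then show ?thesis using fe[of a b] fr[of a] fr[of b] ab by (auto simp: f'_def)
    qed
  qed
  then show ?thesis unfolding k_def by (rule chi_le)
qed

lemma chi_lipschitz:
  "\<bar>real (chromatic_number n (g(x:=True))) - real (chromatic_number n (g(x:=False)))\<bar> \<le> 1"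
proof -
  have a: "chromatic_number n (g(x:=True)) \<le> chromatic_number n (g(x:=False)) + 1"
    using chi_add_edge[of n "g(x:=False)" x] by simp
  have b: "chromatic_number n (g(x:=False)) \<le> chromatic_number n (g(x:=True))"
    by (rule chi_mono) auto
  show ?thesis using a b by linarith
qed

lemma chi_remove:
  assumes uv: "u < v" "v < n" and U: "universal n e u" and V: "universal n e v"
  shows "chromatic_number n (e((u,v):=False)) + 1 = chromatic_number n e"
proof (rule antisym)
  let ?e2 = "e((u,v):=False)"
  show "chromatic_number n e \<le> chromatic_number n ?e2 + 1"
  proof -
    have "chromatic_number n e \<le> chromatic_number n (?e2((u,v):=True))"
      by (rule chi_mono) auto
    also have "\<dots> \<le> chromatic_number n ?e2 + 1" by (rule chi_add_edge)
    finally show ?thesis .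
  qed
  show "chromatic_number n ?e2 + 1 \<le> chromatic_number n e"
  proof -
    define k where "k = chromatic_number n e"
    obtain f where f: "proper_colouring n e k f" unfolding k_def using chi_ex by blast
    have fr: "\<And>i. i < n \<Longrightarrow> f i < k" using f by (auto simp: proper_colouring_def)
    have fe: "\<And>i j. i < n \<Longrightarrow> j < n \<Longrightarrow> adj e i j \<Longrightarrow> i \<noteq> j \<Longrightarrow> f i \<noteq> f j"
      using f unfolding proper_colouring_def adj_def by (metis linorder_neqE_nat)
    have fu: "\<And>x. x < n \<Longrightarrow> x \<noteq> u \<Longrightarrow> f x \<noteq> f u"
      using U fe unfolding universal_def by (metis)
    have fv: "\<And>x. x < n \<Longrightarrow> x \<noteq> v \<Longrightarrow> f x \<noteq> f v"
      using V fe unfolding universal_def by (metis)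
    have k1: "k \<ge> 1" using fr[of v] uv by auto
    define c0 where "c0 = f v"
    define f' where "f' = f(v := f u)"
    have f'r: "f' x < k" if "x < n" for x using fr that uv by (auto simp: f'_def)
    have f'c: "f' x \<noteq> c0" if "x < n" for x
      using fu[of v] fv[of x] uv that by (auto simp: f'_def c0_def)
    define g where "g = (\<lambda>x. if f' x = k - 1 then c0 else f' x)"
    have gr: "g x < k - 1" if x: "x < n" for x
    proof (cases "f' x = k - 1")
      case True
      have "c0 \<noteq> k - 1" using True f'c[OF x] by auto
      moreover have "c0 < k" using fr uv c0_def by auto
      ultimately show ?thesis using True g_def by auto
    next
      case False
      then show ?thesis using f'r[OF x] g_def by auto
    qed
    have "proper_colouring n ?e2 (k - 1) g"
      unfolding proper_colouring_def
    proof (intro conjI allI impI)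
      fix i assume "i < n" then show "g i < k - 1" by (rule gr)
    next
      fix i j assume ij: "i < j \<and> j < n \<and> (e((u, v) := False)) (i, j)"
      then have eij: "e (i,j)" and ne: "(i,j) \<noteq> (u,v)" by (auto split: if_splits)
      have i: "i < n" using ij by auto
      have j: "j < n" using ij by auto
      have hne: "f i \<noteq> f j" using fe[OF i j] eij ij by (auto simp: adj_def)
      have f'ne: "f' i \<noteq> f' j"
      proof (cases "i = v \<or> j = v")
        case True
        then show ?thesis
        proof
          assume "i = v"
          then have "j \<noteq> u" using ij uv by auto
          then show ?thesis using fu[OF j] \<open>i = v\<close> ij by (auto simp: f'_def)
        next
          assume "j = v"
          then have "i \<noteq> u" using ne by auto
          then show ?thesis using fu[OF i] \<open>j = v\<close> ij by (auto simp: f'_def)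
        qed
      next
        case False
        then show ?thesis using hne by (auto simp: f'_def)
      qed
      show "g i \<noteq> g j"
        using f'ne f'c[OF i] f'c[OF j] unfolding g_def by auto
    qed
    then have "chromatic_number n ?e2 \<le> k - 1" by (rule chi_le)
    then show ?thesis using k1 unfolding k_def by linarith
  qed
qed


lemma cheb_pmf:
  fixes f :: "'a \<Rightarrow> real"
  assumes fin: "finite (set_pmf M)" and t: "t > 0"
  shows "measure_pmf.prob M {x. t \<le> \<bar>f x - (\<integral>y. f y \<partial>M)\<bar>} \<le> Var_pmf M f / t^2"
proof -
  define m where "m = (\<integral>y. f y \<partial>M)"
  have int: "integrable M h" for h :: "_ \<Rightarrow> real" by (rule integrable_measure_pmf_finite[OF fin])
  have "measure_pmf.prob M {x. t \<le> \<bar>f x - m\<bar>} = (\<integral>x. indicator {x. t \<le> \<bar>f x - m\<bar>} x \<partial>M)"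
    by simp
  also have "\<dots> \<le> (\<integral>x. (f x - m)^2 / t^2 \<partial>M)"
  proof (rule integral_mono[OF int int])
    fix x
    show "indicator {x. t \<le> \<bar>f x - m\<bar>} x \<le> (f x - m)^2 / t^2"
    proof (cases "t \<le> \<bar>f x - m\<bar>")
      case True
      then have "t^2 \<le> (f x - m)^2" using t by (metis abs_of_pos power2_abs power_mono abs_ge_zero order_less_imp_le)
      then show ?thesis using True t by (simp add: field_simps)
    qed simp
  qed
  also have "(\<integral>x. (f x - m)^2 / t^2 \<partial>M) = ((\<integral>x. (f x)^2 \<partial>M) - 2 * m * (\<integral>x. f x \<partial>M) + m^2) / t^2"
  proof -
    have "(\<integral>x. (f x - m)^2 / t^2 \<partial>M) = (\<integral>x. (f x)^2 - 2 * m * f x + m^2 \<partial>M) / t^2"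
      by (simp add: power2_diff algebra_simps)
    also have "(\<integral>x. (f x)^2 - 2 * m * f x + m^2 \<partial>M) = (\<integral>x. (f x)^2 \<partial>M) - 2 * m * (\<integral>x. f x \<partial>M) + m^2"
      using int by (simp add: Bochner_Integration.integral_add Bochner_Integration.integral_diff)
    finally show ?thesis .
  qed
  also have "\<dots> = Var_pmf M f / t^2" unfolding Var_pmf_def m_def by (simp add: power2_eq_square)
  finally show ?thesis unfolding m_def .
qed

lemma finite_vertex_pairs: "finite (vertex_pairs n)"
  by (rule finite_subset[of _ "{..<n} \<times> {..<n}"]) (auto simp: vertex_pairs_def)

lemma card_vertex_pairs: "card (vertex_pairs n) \<le> n^2"
proof -
  have "card (vertex_pairs n) \<le> card ({..<n} \<times> {..<n})"
    by (rule card_mono) (auto simp: vertex_pairs_def)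
  then show ?thesis by (simp add: power2_eq_square)
qed

lemma finite_Gnp: "finite (set_pmf (Gnp n p))"
  unfolding Gnp_def by (rule finite_set_Pi_bern[OF finite_vertex_pairs])

lemma var_chi:
  assumes "0 \<le> p" "p \<le> 1"
  shows "Var_pmf (Gnp n p) (\<lambda>E. real (chromatic_number n E)) \<le> real n ^ 2 * (1 - p)"
proof -
  have "Var_pmf (Gnp n p) (\<lambda>E. real (chromatic_number n E)) \<le> real (card (vertex_pairs n)) * (p*(1-p)) * 1^2"
    unfolding Gnp_def by (rule efron_stein[OF finite_vertex_pairs assms]) (rule chi_lipschitz)
  also have "\<dots> \<le> real n ^ 2 * (1 - p)"
  proof -
    have "real (card (vertex_pairs n)) \<le> real n ^ 2" using card_vertex_pairs by (metis of_nat_le_iff of_nat_power)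
    moreover have "p * (1-p) \<le> 1 - p" using assms by (simp add: mult_left_le_one_le)
    ultimately show ?thesis using assms by (simp add: mult_mono)
  qed
  finally show ?thesis .
qed

lemma part1:
  fixes D :: real
  assumes reg: "edge_prob_regime D p" and om: "filterlim \<omega> at_top sequentially"
  shows "\<exists>I :: nat \<Rightarrow> nat.
           (\<lambda>n. chi_prob n (p n)
                  {I n .. I n + nat \<lfloor>\<omega> n * real n * sqrt (1 - p n)\<rfloor>}) \<longlonglongrightarrow> 1"
proof -
  have p01: "0 \<le> p n" "p n \<le> 1" for n using reg by (auto simp: edge_prob_regime_def)
  have nq: "filterlim (\<lambda>n. real n ^ 2 * (1 - p n)) at_top sequentially"
    using reg by (auto simp: edge_prob_regime_def)
  define z where "z n = real n * sqrt (1 - p n)" for n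
  have zsq: "z n = sqrt (real n ^ 2 * (1 - p n))" for n
    unfolding z_def by (simp add: real_sqrt_mult)
  have zlim: "filterlim z at_top sequentially"
    unfolding zsq by (rule filterlim_compose[OF sqrt_at_top nq])
  define L where "L n = nat \<lfloor>\<omega> n * real n * sqrt (1 - p n)\<rfloor>" for n
  define m where "m n = (\<integral>E. real (chromatic_number n E) \<partial>Gnp n (p n))" for n
  define I where "I n = nat \<lceil>m n - real (L n) / 2\<rceil>" for n
  have ev: "\<forall>\<^sub>F n in sequentially. 1 - 16 / (\<omega> n)^2 \<le> chi_prob n (p n) {I n .. I n + L n}"
  proof -
    have "\<forall>\<^sub>F n in sequentially. z n \<ge> 2" using zlim by (simp add: filterlim_at_top)
    moreover have "\<forall>\<^sub>F n in sequentially. \<omega> n \<ge> 4" using om by (simp add: filterlim_at_top)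
    ultimately show ?thesis
    proof eventually_elim
      case (elim n)
      have z0: "z n \<ge> 2" and w4: "\<omega> n \<ge> 4" using elim by auto
      have Lge: "real (L n) \<ge> \<omega> n * z n / 2"
      proof -
        have y: "\<omega> n * real n * sqrt (1 - p n) = \<omega> n * z n" by (simp add: z_def mult.assoc)
        have y8: "\<omega> n * z n \<ge> 8" using mult_mono[OF w4 z0] w4 by simp
        have "real (L n) = real_of_int \<lfloor>\<omega> n * z n\<rfloor>" unfolding L_def y using y8 by simp
        then have "real (L n) \<ge> \<omega> n * z n - 1" by linarith
        moreover note y8
        ultimately show ?thesis by linarith
      qed
      define t where "t = real (L n) / 2"
      have t0: "t > 0"
      proof -
        have "\<omega> n * z n > 0" using z0 w4 by simp
        then show ?thesis using Lge t_def by linarith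
      qed
      have sub: "{E. chromatic_number n E \<notin> {I n .. I n + L n}} \<subseteq>
                 {E. t \<le> \<bar>real (chromatic_number n E) - m n\<bar>}"
      proof safe
        fix E assume nin: "chromatic_number n E \<notin> {I n .. I n + L n}"
        show "t \<le> \<bar>real (chromatic_number n E) - m n\<bar>"
        proof (rule ccontr)
          assume "\<not> ?thesis"
          then have lt: "\<bar>real (chromatic_number n E) - m n\<bar> < t" by simp
          have a: "I n \<le> chromatic_number n E"
          proof -
            have "m n - real (L n) / 2 \<le> real (chromatic_number n E)" using lt t_def by linarith
            then have "\<lceil>m n - real (L n) / 2\<rceil> \<le> int (chromatic_number n E)"
              by (simp add: ceiling_le_iff)
            then show ?thesis unfolding I_def by linarith
          qed
          have b: "chromatic_number n E \<le> I n + L n"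
          proof -
            have c1: "real_of_int \<lceil>m n - real (L n) / 2\<rceil> \<ge> m n - real (L n) / 2" by (rule le_of_int_ceiling)
            have c2: "real (nat c) \<ge> real_of_int c" for c :: int by (cases "c \<ge> 0") auto
            have "real (I n) \<ge> m n - real (L n) / 2" unfolding I_def using c1 c2 order_trans by blast
            then have "real (chromatic_number n E) \<le> real (I n + L n)" using lt t_def by (simp only: of_nat_add)
            then show ?thesis by linarith
          qed
          show False using a b nin by auto
        qed
      qed
      have "measure_pmf.prob (Gnp n (p n)) {E. chromatic_number n E \<notin> {I n .. I n + L n}}
          \<le> measure_pmf.prob (Gnp n (p n)) {E. t \<le> \<bar>real (chromatic_number n E) - m n\<bar>}"
        by (rule measure_pmf.finite_measure_mono[OF sub]) simp
      also have "\<dots> \<le> Var_pmf (Gnp n (p n)) (\<lambda>E. real (chromatic_number n E)) / t^2"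
        unfolding m_def by (rule cheb_pmf[OF finite_Gnp t0])
      also have "\<dots> \<le> (z n)^2 / t^2"
      proof -
        have "(z n)^2 = real n ^ 2 * (1 - p n)" unfolding z_def using p01[of n]
          by (simp add: power_mult_distrib)
        then show ?thesis using var_chi[OF p01] t0 by (simp add: divide_right_mono)
      qed
      also have "\<dots> \<le> 16 / (\<omega> n)^2"
      proof -
        have "t \<ge> \<omega> n * z n / 4" using Lge t_def by simp
        then have "t^2 \<ge> (\<omega> n * z n / 4)^2" using z0 w4 by (intro power_mono) auto
        then have "(z n)^2 / t^2 \<le> (z n)^2 / (\<omega> n * z n / 4)^2"
          using z0 w4 t0 by (intro divide_left_mono) auto
        also have "\<dots> = 16 / (\<omega> n)^2" using z0 w4 by (simp add: field_simps power2_eq_square)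
        finally show ?thesis .
      qed
      finally have "measure_pmf.prob (Gnp n (p n)) {E. chromatic_number n E \<notin> {I n .. I n + L n}} \<le> 16 / (\<omega> n)^2" .
      moreover have "measure_pmf.prob (Gnp n (p n)) {E. chromatic_number n E \<in> {I n .. I n + L n}} =
         1 - measure_pmf.prob (Gnp n (p n)) {E. chromatic_number n E \<notin> {I n .. I n + L n}}"
      proof -
        have "{E. chromatic_number n E \<notin> {I n .. I n + L n}} = UNIV - {E. chromatic_number n E \<in> {I n .. I n + L n}}" by auto
        then show ?thesis using measure_pmf.prob_compl[of "{E. chromatic_number n E \<in> {I n .. I n + L n}}" "Gnp n (p n)"] by simp
      qed
      ultimately show ?case unfolding chi_prob_def by linarith
    qed
  qed
  have lim16: "(\<lambda>n. 1 - 16 / (\<omega> n)^2) \<longlonglongrightarrow> 1"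
  proof -
    have "filterlim (\<lambda>n. (\<omega> n)^2) at_top sequentially"
      by (rule filterlim_pow_at_top[OF _ om]) simp
    then have "(\<lambda>n. 16 / (\<omega> n)^2) \<longlonglongrightarrow> 0"
      by (intro tendsto_divide_0[OF tendsto_const] filterlim_at_top_imp_at_infinity)
    from tendsto_diff[OF tendsto_const[of 1] this] show ?thesis by simp
  qed
  have le1: "\<forall>\<^sub>F n in sequentially. chi_prob n (p n) {I n .. I n + L n} \<le> 1"
    by (simp add: chi_prob_def)
  have "(\<lambda>n. chi_prob n (p n) {I n .. I n + L n}) \<longlonglongrightarrow> 1"
    by (rule tendsto_sandwich[OF ev le1 lim16 tendsto_const])
  then show ?thesis unfolding L_def by blast
qed


definition pairs_in :: "nat set \<Rightarrow> (nat \<times> nat) set" where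
  "pairs_in S = {(i,j). i < j \<and> i \<in> S \<and> j \<in> S}"

definition is_matching :: "(nat \<times> nat) set \<Rightarrow> bool" where
  "is_matching A \<longleftrightarrow> (\<forall>a\<in>A. \<forall>b\<in>A. a \<noteq> b \<longrightarrow> {fst a, snd a} \<inter> {fst b, snd b} = {})"

definition Mat :: "nat set \<Rightarrow> nat \<Rightarrow> (nat \<times> nat) set set" where
  "Mat S k = {A. A \<subseteq> pairs_in S \<and> is_matching A \<and> card A = k}"

fun mc :: "nat \<Rightarrow> nat \<Rightarrow> nat" where
  "mc w 0 = 1"
| "mc 0 (Suc k) = 0"
| "mc (Suc w) (Suc k) = mc w (Suc k) + w * mc (w - 1) k"

lemma finite_pairs_in: "finite S \<Longrightarrow> finite (pairs_in S)"
  by (rule finite_subset[of _ "S \<times> S"]) (auto simp: pairs_in_def)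

lemma finite_Mat: "finite S \<Longrightarrow> finite (Mat S k)"
  by (rule finite_subset[of _ "Pow (pairs_in S)"]) (auto simp: Mat_def finite_pairs_in)

lemma Mat_0: "finite S \<Longrightarrow> Mat S 0 = {{}}"
proof -
  assume S: "finite S"
  have "A = {}" if "A \<subseteq> pairs_in S" "card A = 0" for A
    using that finite_subset[OF that(1) finite_pairs_in[OF S]] by simp
  then show ?thesis by (auto simp: Mat_def is_matching_def)
qed

lemma Mat_empty_Suc: "Mat {} (Suc k) = {}"
  by (auto simp: Mat_def pairs_in_def)

lemma Mat_split:
  assumes fin: "finite S" and x: "x \<notin> S" and mx: "\<forall>y\<in>S. y < x"
  shows "Mat (insert x S) (Suc k) = Mat S (Suc k) \<union> (\<Union>y\<in>S. insert (y,x) ` Mat (S - {y}) k)"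
proof (intro equalityI subsetI)
  fix A assume A: "A \<in> Mat (insert x S) (Suc k)"
  then have Asub: "A \<subseteq> pairs_in (insert x S)" and Am: "is_matching A" and Ac: "card A = Suc k"
    by (auto simp: Mat_def)
  have finA: "finite A" using Ac card.infinite by fastforce
  show "A \<in> Mat S (Suc k) \<union> (\<Union>y\<in>S. insert (y,x) ` Mat (S - {y}) k)"
  proof (cases "\<exists>y. (y,x) \<in> A")
    case False
    have "A \<subseteq> pairs_in S"
    proof
      fix a assume a: "a \<in> A"
      obtain i j where ij: "a = (i,j)" by (cases a)
      have "i < j" "i \<in> insert x S" "j \<in> insert x S" using Asub a ij by (auto simp: pairs_in_def)
      moreover have "j \<noteq> x" using False a ij by auto
      moreover have "i \<noteq> x" using \<open>i < j\<close> \<open>j \<in> insert x S\<close> \<open>j \<noteq> x\<close> mx x by auto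
      ultimately show "a \<in> pairs_in S" using ij by (auto simp: pairs_in_def)
    qed
    then show ?thesis using Am Ac by (auto simp: Mat_def)
  next
    case True
    then obtain y where y: "(y,x) \<in> A" by blast
    then have yS: "y \<in> S" using Asub x by (auto simp: pairs_in_def)
    define B where "B = A - {(y,x)}"
    have "B \<subseteq> pairs_in (S - {y})"
    proof
      fix a assume a: "a \<in> B"
      obtain i j where ij: "a = (i,j)" by (cases a)
      have aA: "a \<in> A" and ane: "a \<noteq> (y,x)" using a B_def by auto
      have disj: "{i, j} \<inter> {y, x} = {}" using Am aA y ane ij unfolding is_matching_def by force
      have "i < j" "i \<in> insert x S" "j \<in> insert x S" using Asub aA ij by (auto simp: pairs_in_def)
      then show "a \<in> pairs_in (S - {y})" using disj ij by (auto simp: pairs_in_def)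
    qed
    moreover have "is_matching B" using Am unfolding B_def is_matching_def by blast
    moreover have "card B = k" using Ac y finA unfolding B_def by simp
    ultimately have "B \<in> Mat (S - {y}) k" by (auto simp: Mat_def)
    moreover have "A = insert (y,x) B" using y B_def by auto
    ultimately show ?thesis using yS by blast
  qed
next
  fix A assume "A \<in> Mat S (Suc k) \<union> (\<Union>y\<in>S. insert (y,x) ` Mat (S - {y}) k)"
  then show "A \<in> Mat (insert x S) (Suc k)"
  proof
    assume "A \<in> Mat S (Suc k)"
    then show ?thesis by (auto simp: Mat_def pairs_in_def)
  next
    assume "A \<in> (\<Union>y\<in>S. insert (y,x) ` Mat (S - {y}) k)"
    then obtain y B where yS: "y \<in> S" and B: "B \<in> Mat (S - {y}) k" and AB: "A = insert (y,x) B" by blast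
    have Bsub: "B \<subseteq> pairs_in (S - {y})" and Bm: "is_matching B" and Bc: "card B = k"
      using B by (auto simp: Mat_def)
    have finB: "finite B" using Bsub finite_pairs_in fin finite_subset by (metis finite_Diff)
    have notin: "(y,x) \<notin> B" using Bsub by (auto simp: pairs_in_def)
    have "A \<subseteq> pairs_in (insert x S)" using AB Bsub yS mx by (auto simp: pairs_in_def)
    moreover have "is_matching A"
      unfolding is_matching_def AB
    proof (intro ballI impI)
      fix a b assume a: "a \<in> insert (y,x) B" and b: "b \<in> insert (y,x) B" and ab: "a \<noteq> b"
      have dis: "{fst c, snd c} \<inter> {y, x} = {}" if "c \<in> B" for c
        using Bsub that x by (auto simp: pairs_in_def)
      show "{fst a, snd a} \<inter> {fst b, snd b} = {}"
        using a b ab dis Bm unfolding is_matching_def by (auto; blast)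
    qed
    moreover have "card A = Suc k" using AB notin finB Bc by simp
    ultimately show ?thesis by (auto simp: Mat_def)
  qed
qed

lemma card_Mat: "finite S \<Longrightarrow> card (Mat S k) = mc (card S) k"
proof (induction "card S" arbitrary: S k rule: less_induct)
  case less
  show ?case
  proof (cases k)
    case 0
    then show ?thesis using Mat_0[OF less.prems] by simp
  next
    case (Suc k')
    show ?thesis
    proof (cases "S = {}")
      case True
      then show ?thesis using Suc by (simp add: Mat_empty_Suc)
    next
      case False
      define x where "x = Max S"
      define S' where "S' = S - {x}"
      have xS: "x \<in> S" using False less.prems x_def by simp
      have S: "S = insert x S'" using xS S'_def by auto
      have finS': "finite S'" using less.prems S'_def by simp
      have xn: "x \<notin> S'" using S'_def by simp
      have mx: "\<forall>y\<in>S'. y < x" using less.prems S'_def x_def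
        by (metis Diff_iff Max_ge order_le_less singletonI)
      have cS: "card S = Suc (card S')" using S finS' xn by simp
      have split: "Mat S (Suc k') = Mat S' (Suc k') \<union> (\<Union>y\<in>S'. insert (y,x) ` Mat (S' - {y}) k')"
        using Mat_split[OF finS' xn mx] S by simp
      have disj1: "Mat S' (Suc k') \<inter> (\<Union>y\<in>S'. insert (y,x) ` Mat (S' - {y}) k') = {}"
        using xn by (auto simp: Mat_def pairs_in_def)
      have fin_img: "finite (insert (y,x) ` Mat (S' - {y}) k')" for y
        using finS' by (simp add: finite_Mat)
      have inj: "inj_on (insert (y,x)) (Mat (S' - {y}) k')" for y
      proof (rule inj_onI)
        fix A B assume "A \<in> Mat (S' - {y}) k'" "B \<in> Mat (S' - {y}) k'" "insert (y,x) A = insert (y,x) B"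
        moreover have "(y,x) \<notin> A" "(y,x) \<notin> B" using calculation(1,2) by (auto simp: Mat_def pairs_in_def)
        ultimately show "A = B" by (metis insert_ident)
      qed
      have disj2: "\<forall>y\<in>S'. \<forall>y'\<in>S'. y \<noteq> y' \<longrightarrow>
          insert (y,x) ` Mat (S' - {y}) k' \<inter> insert (y',x) ` Mat (S' - {y'}) k' = {}"
      proof (intro ballI impI)
        fix y y' assume "y \<in> S'" "y' \<in> S'" "y \<noteq> y'"
        show "insert (y,x) ` Mat (S' - {y}) k' \<inter> insert (y',x) ` Mat (S' - {y'}) k' = {}"
        proof (rule ccontr)
          assume "\<not> ?thesis"
          then obtain A B where A: "A \<in> Mat (S' - {y}) k'" and B: "B \<in> Mat (S' - {y'}) k'"
            and eq: "insert (y,x) A = insert (y',x) B" by blast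
          have "(y',x) \<in> insert (y,x) A" using eq by auto
          then have "(y',x) \<in> A" using \<open>y \<noteq> y'\<close> by auto
          then show False using A xn by (auto simp: Mat_def pairs_in_def)
        qed
      qed
      have "card (Mat S (Suc k')) = card (Mat S' (Suc k')) + card (\<Union>y\<in>S'. insert (y,x) ` Mat (S' - {y}) k')"
        unfolding split by (rule card_Un_disjoint[OF finite_Mat[OF finS'] _ disj1]) (use finS' fin_img in auto)
      also have "card (\<Union>y\<in>S'. insert (y,x) ` Mat (S' - {y}) k') = (\<Sum>y\<in>S'. card (insert (y,x) ` Mat (S' - {y}) k'))"
        by (rule card_UN_disjoint[OF finS']) (use fin_img disj2 in auto)
      also have "\<dots> = (\<Sum>y\<in>S'. mc (card S' - 1) k')"
      proof (rule sum.cong[OF refl])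
        fix y assume y: "y \<in> S'"
        have "card (insert (y,x) ` Mat (S' - {y}) k') = card (Mat (S' - {y}) k')"
          by (rule card_image[OF inj])
        also have "\<dots> = mc (card (S' - {y})) k'"
          by (rule less.hyps) (use cS finS' y in \<open>auto simp: card_Diff_singleton\<close>)
        also have "card (S' - {y}) = card S' - 1" using y finS' by simp
        finally show "card (insert (y,x) ` Mat (S' - {y}) k') = mc (card S' - 1) k'" .
      qed
      also have "card (Mat S' (Suc k')) = mc (card S') (Suc k')"
        by (rule less.hyps) (use cS finS' in auto)
      finally show ?thesis using Suc cS by simp
    qed
  qed
qed


lemma mc_zero: "w < 2 * k \<Longrightarrow> mc w k = 0"
proof (induction w k rule: mc.induct)
  case (3 w k)
  have a: "mc w (Suc k) = 0" using 3 by simp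
  have b: "w * mc (w - 1) k = 0"
  proof (cases "w = 0")
    case False
    then have "w - 1 < 2 * k" using "3.prems" by simp
    then show ?thesis using "3.IH"(2) by simp
  qed simp
  show ?case using a b by simp
qed auto

lemma mc_closed: "2 * k \<le> w \<Longrightarrow> real (mc w k) * (fact k * 2^k * fact (w - 2*k)) = fact w"
proof (induction w k rule: mc.induct)
  case (1 w)
  then show ?case by simp
next
  case (2 k)
  then show ?case by simp
next
  case (3 w k)
  show ?case
  proof (cases "2 * k + 2 \<le> w")
    case True
    define a where "a = w - 2*k - 2"
    have w: "w = a + 2*k + 2" using True by (simp add: a_def)
    have e1: "w - 2 * Suc k = a" using w by simp
    have e2: "w - 1 - 2 * k = Suc a" using w by simp
    have e3: "Suc w - 2 * Suc k = Suc a" using w by simp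
    have IH1: "real (mc w (Suc k)) * (fact (Suc k) * 2^(Suc k) * fact a) = fact w"
      using "3.IH"(1) True unfolding e1 by simp
    have IH2: "real (mc (w - 1) k) * (fact k * 2^k * fact (Suc a)) = fact (w - 1)"
      using "3.IH"(2) True unfolding e2 by simp
    have fw: "fact w = real w * fact (w - 1)" using w by (simp add: fact_reduce)
    have fa: "fact (Suc a) = real (Suc a) * (fact a :: real)" by (rule fact_Suc)
    have fk: "fact (Suc k) = real (Suc k) * (fact k :: real)" by (rule fact_Suc)
    have "real (mc (Suc w) (Suc k)) * (fact (Suc k) * 2^(Suc k) * fact (Suc w - 2 * Suc k))
        = (real (mc w (Suc k)) + real w * real (mc (w - 1) k)) * (fact (Suc k) * 2^(Suc k) * fact (Suc a))"
      unfolding e3 by simp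
    also have "\<dots> = (real (mc w (Suc k)) * (fact (Suc k) * 2^(Suc k) * fact a)) * real (Suc a)
        + real w * (real (mc (w - 1) k) * (fact k * 2^k * fact (Suc a))) * (2 * real (Suc k))"
      unfolding fa fk power_Suc by (simp only: algebra_simps)
    also have "\<dots> = fact w * real (Suc a) + real w * fact (w - 1) * (2 * real (Suc k))"
      unfolding IH1 IH2 by simp
    also have "\<dots> = fact w * real (Suc w)" unfolding fw using w by (simp add: algebra_simps)
    also have "\<dots> = fact (Suc w)" by (simp add: fact_Suc)
    finally show ?thesis .
  next
    case False
    then have w: "w = 2*k + 1" using "3.prems" by simp
    have z: "mc w (Suc k) = 0" by (rule mc_zero) (use w in simp)
    have e2: "w - 1 - 2 * k = 0" using w by simp
    have e3: "Suc w - 2 * Suc k = 0" using w by simp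
    have IH2: "real (mc (w - 1) k) * (fact k * 2^k) = fact (w - 1)"
      using "3.IH"(2) w unfolding e2 by simp
    have fk: "fact (Suc k) = real (Suc k) * (fact k :: real)" by (rule fact_Suc)
    have "real (mc (Suc w) (Suc k)) * (fact (Suc k) * 2^(Suc k) * fact (Suc w - 2 * Suc k))
        = real w * (real (mc (w - 1) k) * (fact k * 2^k)) * (2 * real (Suc k))"
      unfolding e3 fk power_Suc using z by (simp only: mc.simps of_nat_add of_nat_mult fact_0 algebra_simps)
    also have "\<dots> = real w * fact (w - 1) * (2 * real (Suc k))" unfolding IH2 by simp
    also have "\<dots> = fact (Suc w)" using w by (simp add: fact_Suc algebra_simps)
    finally show ?thesis .
  qed
qed

lemma mc_ratio:
  "2 * real (Suc k) * real (mc w (Suc k)) = real (w - 2*k) * real (w - 2*k - 1) * real (mc w k)"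
proof (cases "2 * k + 2 \<le> w")
  case True
  define a where "a = w - 2*k - 2"
  have w: "w = a + 2*k + 2" using True by (simp add: a_def)
  have e1: "w - 2 * Suc k = a" using w by simp
  have e2: "w - 2 * k = Suc (Suc a)" using w by simp
  have A: "real (mc w (Suc k)) * (fact (Suc k) * 2^(Suc k) * fact a) = fact w"
    using mc_closed[of "Suc k" w] True unfolding e1 by simp
  have B: "real (mc w k) * (fact k * 2^k * fact (Suc (Suc a))) = fact w"
    using mc_closed[of k w] True unfolding e2 by simp
  have fa: "fact (Suc (Suc a)) = real (Suc (Suc a)) * (real (Suc a) * (fact a :: real))" by (simp add: fact_Suc)
  have fk: "fact (Suc k) = real (Suc k) * (fact k :: real)" by (rule fact_Suc)
  have pos: "(fact k * 2^k * fact a :: real) > 0" by simp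
  have "2 * real (Suc k) * real (mc w (Suc k)) * (fact k * 2^k * fact a)
      = real (mc w (Suc k)) * (fact (Suc k) * 2^(Suc k) * fact a)" unfolding fk power_Suc by (simp only: algebra_simps)
  also have "\<dots> = real (mc w k) * (fact k * 2^k * fact (Suc (Suc a)))" using A B by simp
  also have "\<dots> = real (w - 2*k) * real (w - 2*k - 1) * real (mc w k) * (fact k * 2^k * fact a)"
    unfolding fa e2 by (simp only: algebra_simps diff_Suc_1)
  finally show ?thesis using pos by simp
next
  case False
  then have "w - 2*k = 0 \<or> w - 2*k - 1 = 0" by auto
  moreover have "mc w (Suc k) = 0" by (rule mc_zero) (use False in simp)
  ultimately show ?thesis by auto
qed

lemma mc_pos: "2 * k \<le> w \<Longrightarrow> mc w k > 0"
  using mc_closed[of k w] by (metis fact_nonzero mult_eq_0_iff of_nat_0 gr0I)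


lemma ratio_a:
  fixes r :: real
  shows "2 * real (Suc j) * (real (mc w (Suc j)) * r^(Suc j)) =
         real (w - 2*j) * real (w - 2*j - 1) * r * (real (mc w j) * r^j)"
proof -
  have "2 * real (Suc j) * (real (mc w (Suc j)) * r^(Suc j)) = (2 * real (Suc j) * real (mc w (Suc j))) * r * r^j"
    by (simp add: algebra_simps)
  also have "\<dots> = real (w - 2*j) * real (w - 2*j - 1) * r * (real (mc w j) * r^j)"
    unfolding mc_ratio by (simp add: algebra_simps)
  finally show ?thesis .
qed

lemma key_ineq:
  fixes B S X r K M :: real
  assumes S1: "S \<ge> 1" and B: "B \<ge> 16 * S^2 + 2" and K: "K \<ge> 4 * S^2 + S"
    and r: "r > 0" and BK: "B * (B - 1) * r \<le> 2 * (K + 1)"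
    and X0: "0 \<le> X" and XB: "X \<le> B + 2 * S" and M: "M + 1 \<ge> K - S + 1"
  shows "X * (X - 1) * r \<le> 2 * (M + 1) * (1 + 1 / S)"
proof -
  define u where "u = 1 / (8 * S)"
  have S2: "S^2 \<ge> 0" by simp
  have B0: "B \<ge> 2" using B S2 by linarith
  have u0: "u > 0" and u8: "u \<le> 1/8" using S1 by (auto simp: u_def field_simps)
  have "X * (X - 1) \<le> (B + 2*S) * (B + 2*S - 1)"
  proof (cases "X \<le> 1")
    case True
    then have "X * (X - 1) \<le> 0" using X0 by (simp add: mult_nonneg_nonpos)
    moreover have "(B + 2*S) * (B + 2*S - 1) \<ge> 0"
    proof -
      have "S^2 \<ge> 0" by simp
      then show ?thesis using B S1 by (intro mult_nonneg_nonneg) linarith+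
    qed
    ultimately show ?thesis by linarith
  next
    case False
    then show ?thesis using XB by (intro mult_mono) auto
  qed
  also have "\<dots> \<le> ((1 + u) * B) * ((1 + u) * (B - 1))"
  proof (intro mult_mono)
    have "2 * S \<le> u * B"
    proof -
      have "u * B \<ge> u * (16 * S^2)" using B u0 by (intro mult_left_mono) auto
      also have "u * (16 * S^2) = 2 * S" using S1 by (simp add: u_def power2_eq_square field_simps)
      finally show ?thesis by simp
    qed
    then show "B + 2 * S \<le> (1 + u) * B" by (simp add: algebra_simps)
    have "2 * S \<le> u * (B - 1)"
    proof -
      have "u * (B - 1) \<ge> u * (16 * S^2)" using B u0 by (intro mult_left_mono) auto
      also have "u * (16 * S^2) = 2 * S" using S1 by (simp add: u_def power2_eq_square field_simps)
      finally show ?thesis by simp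
    qed
    then show "B + 2 * S - 1 \<le> (1 + u) * (B - 1)" by (simp add: algebra_simps)
    show "0 \<le> (1 + u) * B" using u0 B0 by simp
    show "0 \<le> B + 2 * S - 1" using B0 S1 by simp
  qed
  finally have X1: "X * (X - 1) \<le> (1 + u)^2 * (B * (B - 1))" by (simp add: power2_eq_square algebra_simps)
  have "X * (X - 1) * r \<le> (1 + u)^2 * (B * (B - 1) * r)"
    using mult_right_mono[OF X1, of r] r by (simp add: algebra_simps)
  also have "\<dots> \<le> (1 + u)^2 * (2 * (K + 1))"
    using BK by (intro mult_left_mono) auto
  also have "K + 1 \<le> (1 + 2*u) * (M + 1)"
  proof -
    have c1: "(1 + 2*u) * (M + 1) \<ge> (1 + 2*u) * (K - S + 1)" using M u0 by (intro mult_left_mono) auto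
    have c2: "(1 + 2*u) * (K - S + 1) = K - S + 1 + (K - S + 1) / (4 * S)"
      using S1 by (simp add: u_def field_simps)
    have c3: "(K - S + 1) / (4 * S) \<ge> S"
    proof -
      have "K - S + 1 \<ge> 4 * S * S" using K by (simp add: power2_eq_square)
      then show ?thesis using S1 by (simp add: field_simps)
    qed
    show ?thesis using c1 c2 c3 by linarith
  qed
  then have "(1 + u)^2 * (2 * (K + 1)) \<le> (1 + u)^2 * (2 * ((1 + 2*u) * (M + 1)))"
    by (intro mult_left_mono) auto
  also have "\<dots> = ((1 + u)^2 * (1 + 2*u)) * (2 * (M + 1))" by (simp add: algebra_simps)
  also have "\<dots> \<le> (1 + 8 * u) * (2 * (M + 1))"
  proof (rule mult_right_mono)
    have "(1 + u)^2 * (1 + 2*u) = 1 + 4*u + u * (5*u + 2*u^2)" by (simp add: power2_eq_square algebra_simps)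
    also have "u * (5*u + 2*u^2) \<le> u * 4"
    proof (rule mult_left_mono)
      have "u^2 \<le> 1" using u0 u8 by (simp add: power_le_one)
      then show "5*u + 2*u^2 \<le> 4" using u8 by linarith
    qed (use u0 in simp)
    finally show "(1 + u)^2 * (1 + 2*u) \<le> 1 + 8 * u" by simp
    show "0 \<le> 2 * (M + 1)" using M K S1 by (smt (verit) zero_le_power2)
  qed
  also have "1 + 8 * u = 1 + 1 / S" using S1 by (simp add: u_def)
  finally show ?thesis by (simp add: algebra_simps)
qed

lemma anticonc:
  fixes w s :: nat and r w0 :: real
  assumes r: "r > 0" and s1: "1 \<le> s"
    and H2a: "2 * r * (16 * real s^2 + 3)^2 < w0" and H2b: "32 * real s^2 + 2 \<le> w0"
    and H3a: "8 * real s^2 + 2 * real s + 2 \<le> (w0/2) * (w0/2 - 1) * r"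
    and H3b: "16 * real s^2 + 4 * real s \<le> w0"
    and ww: "w0 \<le> real w" and w04: "4 \<le> w0"
  shows "real (mc w k) * r^k \<le> 4 / real s * (\<Sum>j\<le>w. real (mc w j) * r^j)"
proof -
  define a where "a j = real (mc w j) * r^j" for j
  have a0: "a j \<ge> 0" for j using r by (simp add: a_def)
  have az: "a j = 0" if "j > w" for j using mc_zero[of w j] that by (simp add: a_def)
  have R: "2 * real (Suc j) * a (Suc j) = real (w - 2*j) * real (w - 2*j - 1) * r * a j" for j
    unfolding a_def by (rule ratio_a)
  define K where "K = {..w}"
  have finK: "finite K" and neK: "K \<noteq> {}" by (auto simp: K_def)
  define Mx where "Mx = Max (a ` K)"
  have "Mx \<in> a ` K" unfolding Mx_def using finK neK by simp
  then obtain km where kmK: "km \<in> K" and akm: "a km = Mx" by auto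
  have amax: "a j \<le> a km" for j
  proof (cases "j \<in> K")
    case True
    then show ?thesis using akm finK unfolding Mx_def by simp
  next
    case False
    then have "a j = 0" using az by (simp add: K_def)
    moreover have "a km \<ge> 0" by (rule a0)
    ultimately show ?thesis by simp
  qed
  have "a 0 = 1" by (simp add: a_def)
  then have akm1: "a km \<ge> 1" using amax[of 0] by simp
  have km_w: "2 * km \<le> w"
  proof (rule ccontr)
    assume "\<not> ?thesis"
    then have "a km = 0" using mc_zero[of w km] by (simp add: a_def)
    then show False using akm1 by simp
  qed
  define b where "b = w - 2 * km"
  have wb: "real w = real b + 2 * real km" using km_w by (simp add: b_def)
  have S2: "real s^2 \<ge> 0" by simp
  have step1: "b \<ge> 16 * s^2 + 2"
  proof (cases km)
    case 0
    then have "real b = real w" using wb by simp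
    then have "real b \<ge> 32 * real s^2 + 2" using ww H2b by simp
    then have "real b \<ge> real (16 * s^2 + 2)" using S2 by (simp only: of_nat_add of_nat_mult of_nat_power of_nat_numeral)
    then show ?thesis by linarith
  next
    case (Suc km')
    have "2 * real km * a km = real (b + 2) * real (b + 1) * r * a km'"
      using R[of km'] Suc km_w unfolding b_def by (simp add: Suc_diff_le algebra_simps)
    also have "\<dots> \<le> real (b + 2) * real (b + 1) * r * a km"
      using amax[of km'] r by (intro mult_left_mono) auto
    finally have "2 * real km \<le> real (b + 2) * real (b + 1) * r" using akm1 by simp
    moreover have "real (b + 2) * real (b + 1) * r \<le> (real b + 2)^2 * r"
    proof -
      have "real (b + 2) * real (b + 1) = (real b + 2) * (real b + 1)" by (simp add: add.commute)
      also have "\<dots> \<le> (real b + 2) * (real b + 2)" by (rule mult_left_mono) auto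
      finally have "real (b + 2) * real (b + 1) \<le> (real b + 2) * (real b + 2)" .
      then show ?thesis using r by (simp add: power2_eq_square)
    qed
    ultimately have kb: "2 * real km \<le> (real b + 2)^2 * r" by linarith
    show ?thesis
    proof (cases "4 * km \<ge> w")
      case True
      then have "w0 / 2 \<le> 2 * real km" using ww by linarith
      then have "(16 * real s^2 + 3)^2 * r < (real b + 2)^2 * r" using kb H2a by (simp add: algebra_simps)
      then have "(16 * real s^2 + 3)^2 < (real b + 2)^2" using r by simp
      then have "16 * real s^2 + 3 < real b + 2"
        using power_less_imp_less_base[of "16 * real s^2 + 3" 2 "real b + 2"] by simp
      then have "real (16 * s^2 + 1) < real b" by simp
      then show ?thesis by linarith
    next
      case False
      then have "real b > real w / 2" using wb by linarith
      then have "real b > 16 * real s^2 + 1" using ww H2b by linarith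
      then have "real (16 * s^2 + 1) < real b" by simp
      then show ?thesis by linarith
    qed
  qed
  have b2: "b \<ge> 2" using step1 by simp
  have step2: "real km \<ge> 4 * real s^2 + real s"
  proof -
    have "2 * real (Suc km) * a (Suc km) = real b * real (b - 1) * r * a km"
      using R[of km] unfolding b_def by simp
    moreover have "2 * real (Suc km) * a (Suc km) \<le> 2 * real (Suc km) * a km"
      using amax[of "Suc km"] by simp
    ultimately have "real b * real (b - 1) * r * a km \<le> 2 * real (Suc km) * a km" by simp
    then have bb: "real b * (real b - 1) * r \<le> 2 * (real km + 1)" using akm1 b2 by (simp add: of_nat_diff)
    show ?thesis
    proof (cases "real b \<ge> real w / 2")
      case True
      then have bw: "real b \<ge> w0 / 2" using ww by linarith
      have ww2: "(w0/2) * (w0/2 - 1) * r \<le> real b * (real b - 1) * r"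
        using bw w04 r by (intro mult_right_mono mult_mono) auto
      have "8 * real s^2 + 2 * real s + 2 \<le> 2 * (real km + 1)"
        using order_trans[OF H3a order_trans[OF ww2 bb]] by simp
      then show ?thesis by (simp add: algebra_simps)
    next
      case False
      then have "real km > real w / 4" using wb by linarith
      then show ?thesis using ww H3b by linarith
    qed
  qed
  have kms: "km \<ge> s"
  proof -
    have "real s \<le> real km" using step2 S2 by linarith
    then show ?thesis by simp
  qed
  have step3a: "a (km - j) \<le> (1 + 1 / real s) * a (km - Suc j)" if j: "j < s" for j
  proof -
    define m where "m = km - Suc j"
    have km_m: "km - j = Suc m" using j kms unfolding m_def by simp
    have X: "real (w - 2*m) = real b + 2 * real (Suc j)"
      using km_w j kms unfolding m_def b_def by (simp add: of_nat_diff)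
    have "real (w - 2*m) * real (w - 2*m - 1) * r = real (w - 2*m) * (real (w - 2*m) - 1) * r"
    proof (cases "w - 2*m = 0")
      case True then show ?thesis by simp
    next
      case False then show ?thesis by (simp add: of_nat_diff)
    qed
    also have "\<dots> \<le> 2 * (real m + 1) * (1 + 1 / real s)"
    proof (rule key_ineq[where B = "real b" and K = "real km"])
      show "1 \<le> real s" using s1 by simp
      have "real (16 * s^2 + 2) \<le> real b" using step1 by (simp only: of_nat_le_iff)
      then show "16 * (real s)^2 + 2 \<le> real b" by (simp only: of_nat_add of_nat_mult of_nat_power of_nat_numeral)
      show "4 * (real s)^2 + real s \<le> real km" by (rule step2)
      show "0 < r" by (rule r)
      show "real b * (real b - 1) * r \<le> 2 * (real km + 1)"
      proof -
        have "2 * real (Suc km) * a (Suc km) = real b * real (b - 1) * r * a km"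
          using R[of km] unfolding b_def by simp
        moreover have "2 * real (Suc km) * a (Suc km) \<le> 2 * real (Suc km) * a km"
          using amax[of "Suc km"] by simp
        ultimately have "real b * real (b - 1) * r * a km \<le> 2 * real (Suc km) * a km" by simp
        then show ?thesis using akm1 b2 by (simp add: of_nat_diff)
      qed
      show "0 \<le> real (w - 2*m)" by simp
      show "real (w - 2*m) \<le> real b + 2 * real s" using X j by simp
      show "real km - real s + 1 \<le> real m + 1" using j kms unfolding m_def by (simp add: of_nat_diff)
    qed
    finally have XX: "real (w - 2*m) * real (w - 2*m - 1) * r \<le> 2 * (real m + 1) * (1 + 1 / real s)" .
    have "2 * real (Suc m) * a (Suc m) = real (w - 2*m) * real (w - 2*m - 1) * r * a m" by (rule R)
    also have "\<dots> \<le> 2 * (real m + 1) * (1 + 1 / real s) * a m"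
      using XX a0[of m] by (rule mult_right_mono)
    finally have "2 * (real m + 1) * a (Suc m) \<le> 2 * (real m + 1) * ((1 + 1 / real s) * a m)"
      by (simp add: algebra_simps)
    then have "a (Suc m) \<le> (1 + 1 / real s) * a m"
      by (rule mult_left_le_imp_le) simp
    then show ?thesis using km_m m_def by simp
  qed
  have step3: "a (km - j) * (1 + 1 / real s)^j \<ge> a km" if "j \<le> s" for j
    using that
  proof (induction j)
    case 0 then show ?case by simp
  next
    case (Suc j)
    have "a km \<le> a (km - j) * (1 + 1 / real s)^j" using Suc by simp
    also have "\<dots> \<le> ((1 + 1 / real s) * a (km - Suc j)) * (1 + 1 / real s)^j"
      using step3a[of j] Suc.prems by (intro mult_right_mono) auto
    also have "\<dots> = a (km - Suc j) * (1 + 1 / real s)^(Suc j)" by (simp add: algebra_simps)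
    finally show ?case .
  qed
  have e4: "(1 + 1 / real s)^s \<le> 4"
  proof -
    have "(1 + 1 / real s)^s \<le> exp 1" using exp_ge_one_plus_x_over_n_power_n[of s 1] s1 by fastforce
    also have "\<dots> \<le> 4" using exp_le by simp
    finally show ?thesis .
  qed
  have lowj: "a i \<ge> a km / 4" if i: "i \<in> {km - s..<km}" for i
  proof -
    define j where "j = km - i"
    have j1: "j \<le> s" "i = km - j" using i kms unfolding j_def by auto
    have "a km \<le> a i * (1 + 1 / real s)^j" using step3[OF j1(1)] j1(2) by simp
    also have "\<dots> \<le> a i * (1 + 1 / real s)^s"
      using j1(1) a0[of i] by (intro mult_left_mono power_increasing) auto
    also have "\<dots> \<le> a i * 4" using e4 a0[of i] by (intro mult_left_mono) auto
    finally show ?thesis by simp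
  qed
  have "real s * (a km / 4) = (\<Sum>i\<in>{km - s..<km}. a km / 4)" using kms by simp
  also have "\<dots> \<le> (\<Sum>i\<in>{km - s..<km}. a i)" using lowj by (rule sum_mono)
  also have "\<dots> \<le> (\<Sum>i\<le>w. a i)"
  proof (rule sum_mono2)
    show "{km - s..<km} \<subseteq> {..w}" using kmK K_def by auto
  qed (auto simp: a0)
  finally have "a km \<le> 4 / real s * (\<Sum>i\<le>w. a i)" using s1 by (simp add: field_simps)
  then show ?thesis using amax[of k] unfolding a_def by simp
qed


definition Om :: "nat \<Rightarrow> (nat \<times> nat \<Rightarrow> bool) set" where
  "Om n = {e. \<forall>x. x \<notin> vertex_pairs n \<longrightarrow> \<not> e x}"

definition iso :: "nat \<Rightarrow> (nat \<times> nat \<Rightarrow> bool) \<Rightarrow> (nat \<times> nat) set" where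
  "iso n e = {(u,v). u < v \<and> v < n \<and> \<not> e (u,v) \<and> (\<forall>x<n. x \<noteq> u \<and> x \<noteq> v \<longrightarrow> adj e u x \<and> adj e v x)}"

definition Phi :: "nat \<Rightarrow> (nat \<times> nat \<Rightarrow> bool) \<Rightarrow> (nat \<times> nat \<Rightarrow> bool)" where
  "Phi n e = (\<lambda>x. e x \<or> x \<in> iso n e)"

definition Wset :: "nat \<Rightarrow> (nat \<times> nat \<Rightarrow> bool) \<Rightarrow> nat set" where
  "Wset n e = {u. universal n e u}"

definition rem :: "(nat \<times> nat \<Rightarrow> bool) \<Rightarrow> (nat \<times> nat) set \<Rightarrow> (nat \<times> nat \<Rightarrow> bool)" where
  "rem e A = (\<lambda>x. e x \<and> x \<notin> A)"

definition MA :: "nat set \<Rightarrow> (nat \<times> nat) set set" where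
  "MA S = {A. A \<subseteq> pairs_in S \<and> is_matching A}"

lemma adj_sym: "adj e i j = adj e j i"
  unfolding adj_def by (cases i j rule: linorder_cases) auto

lemma adj_mono: "(\<And>x. e x \<Longrightarrow> e' x) \<Longrightarrow> adj e i j \<Longrightarrow> adj e' i j"
  unfolding adj_def by (auto split: if_splits)

lemma iso_adj: "(u,v) \<in> iso n e \<Longrightarrow> \<not> adj e u v \<and> \<not> adj e v u"
  unfolding iso_def adj_def by auto

lemma iso_D: "(u,v) \<in> iso n e \<Longrightarrow> x < n \<Longrightarrow> x \<noteq> u \<Longrightarrow> x \<noteq> v \<Longrightarrow> adj e u x \<and> adj e v x"
  unfolding iso_def by auto

lemma iso_sub: "iso n e \<subseteq> vertex_pairs n"
  unfolding iso_def vertex_pairs_def by auto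

lemma Phi_Om: "e \<in> Om n \<Longrightarrow> Phi n e \<in> Om n"
  using iso_sub unfolding Om_def Phi_def by blast

lemma adj_Phi: "adj (Phi n e) u x \<Longrightarrow> adj e u x \<or> (min u x, max u x) \<in> iso n e"
  unfolding adj_def Phi_def by (auto split: if_splits simp: min_def max_def)

lemma iso_Phi: "iso n (Phi n e) = {}"
proof (rule ccontr)
  assume "iso n (Phi n e) \<noteq> {}"
  then obtain u v where uv: "(u,v) \<in> iso n (Phi n e)" by auto
  have uv': "u < v" "v < n" using uv by (auto simp: iso_def)
  have ne: "\<not> e (u,v)" and ni: "(u,v) \<notin> iso n e" using uv by (auto simp: iso_def Phi_def)
  have claim: "adj e y x" if y: "y = u \<or> y = v" and x: "x < n" "x \<noteq> u" "x \<noteq> v" for x y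
  proof (rule ccontr)
    assume nadj: "\<not> adj e y x"
    have "adj (Phi n e) y x" using iso_D[OF uv x] y by auto
    then have "(min y x, max y x) \<in> iso n e" using adj_Phi nadj by blast
    moreover define z where "z = (if y = u then v else u)"
    have z: "z < n" "z \<noteq> y" "z \<noteq> x" using uv' x y by (auto simp: z_def)
    have "adj e (min y x) z \<and> adj e (max y x) z"
      using iso_D[OF calculation z(1)] z by (auto simp: min_def max_def)
    then have "adj e y z" by (auto simp: min_def max_def split: if_splits)
    moreover have "\<not> adj e y z" using ne uv' y by (auto simp: z_def adj_def)
    ultimately show False by blast
  qed
  have "(u,v) \<in> iso n e" unfolding iso_def using uv' ne claim by auto
  then show False using ni by blast
qed

lemma univ_edge: "universal n e u \<Longrightarrow> universal n e v \<Longrightarrow> u < v \<Longrightarrow> e (u,v)"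
  unfolding universal_def adj_def by auto

lemma univ_mono: "(\<And>x. e x \<Longrightarrow> e' x) \<Longrightarrow> universal n e u \<Longrightarrow> universal n e' u"
  unfolding universal_def using adj_mono by blast

lemma iso_W: "iso n e \<subseteq> pairs_in (Wset n (Phi n e))"
proof
  fix a assume a: "a \<in> iso n e"
  obtain u v where a': "a = (u,v)" by (cases a)
  have uv: "u < v" "v < n" using a a' by (auto simp: iso_def)
  have "universal n (Phi n e) y" if y: "y = u \<or> y = v" for y
    unfolding universal_def
  proof (intro conjI allI impI)
    show "y < n" using y uv by auto
  next
    fix x assume x: "x < n" "x \<noteq> y"
    show "adj (Phi n e) y x"
    proof (cases "x = u \<or> x = v")
      case True
      then have "{x,y} = {u,v}" using x y by auto
      then have "adj (Phi n e) y x = Phi n e (u,v)" using uv x unfolding adj_def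
        by (auto simp: doubleton_eq_iff)
      then show ?thesis using a a' by (simp add: Phi_def)
    next
      case False
      then have "adj e y x" using iso_D[of u v n e x] a a' x y by auto
      then show ?thesis by (rule adj_mono[rotated]) (simp add: Phi_def)
    qed
  qed
  then show "a \<in> pairs_in (Wset n (Phi n e))" using a' uv by (auto simp: pairs_in_def Wset_def)
qed

lemma iso_matching: "is_matching (iso n e)"
  unfolding is_matching_def
proof (intro ballI impI)
  fix a b assume a: "a \<in> iso n e" and b: "b \<in> iso n e" and ab: "a \<noteq> b"
  show "{fst a, snd a} \<inter> {fst b, snd b} = {}"
  proof (rule ccontr)
    assume "\<not> ?thesis"
    then obtain c where c: "c \<in> {fst a, snd a}" "c \<in> {fst b, snd b}" by auto
    define d where "d = (if c = fst a then snd a else fst a)"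
    define d' where "d' = (if c = fst b then snd b else fst b)"
    have afa: "fst a < snd a" "snd a < n" using a by (auto simp: iso_def)
    have bfb: "fst b < snd b" "snd b < n" using b by (auto simp: iso_def)
    have aset: "{fst a, snd a} = {c, d}" using c afa by (auto simp: d_def)
    have bset: "{fst b, snd b} = {c, d'}" using c bfb by (auto simp: d'_def)
    have dd: "d \<noteq> d'"
    proof
      assume "d = d'"
      then have "{fst a, snd a} = {fst b, snd b}" using aset bset by simp
      then have "a = b" using afa bfb by (cases a, cases b) (auto simp: doubleton_eq_iff)
      then show False using ab by simp
    qed
    have cd: "c \<noteq> d" "c \<noteq> d'" using afa bfb c by (auto simp: d_def d'_def)
    have d'n: "d' < n" using bfb by (auto simp: d'_def)
    have a2: "a = (fst a, snd a)" by simp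
    have "adj e c d'"
    proof -
      have "adj e (fst a) d' \<and> adj e (snd a) d'"
        using iso_D[of "fst a" "snd a" n e d'] a d'n aset cd dd by (metis a2 doubleton_eq_iff insert_iff)
      then show ?thesis using c by auto
    qed
    moreover have "\<not> adj e c d'"
    proof -
      have "\<not> adj e (fst b) (snd b) \<and> \<not> adj e (snd b) (fst b)" using iso_adj[of "fst b" "snd b" n e] b by simp
      then show ?thesis using c by (auto simp: d'_def)
    qed
    ultimately show False by blast
  qed
qed

lemma rem_Phi: "rem (Phi n e) (iso n e) = e"
  unfolding rem_def Phi_def by (auto simp: fun_eq_iff iso_def)

lemma rem_Om: "e \<in> Om n \<Longrightarrow> rem e A \<in> Om n"
  unfolding Om_def rem_def by auto

lemma pairs_W_edges: "a \<in> pairs_in (Wset n e) \<Longrightarrow> e a"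
  unfolding pairs_in_def Wset_def using univ_edge by auto

lemma matching_other:
  assumes "is_matching A" "(u,v) \<in> A" "(i,j) \<in> A" "(i,j) \<noteq> (u,v)"
  shows "i \<noteq> u \<and> i \<noteq> v \<and> j \<noteq> u \<and> j \<noteq> v"
  using assms unfolding is_matching_def by fastforce

lemma iso_rem:
  assumes e': "iso n e' = {}" and A: "A \<in> MA (Wset n e')"
  shows "iso n (rem e' A) = A"
proof (intro equalityI subsetI)
  fix a assume a: "a \<in> iso n (rem e' A)"
  show "a \<in> A"
  proof (rule ccontr)
    assume na: "a \<notin> A"
    obtain u v where a': "a = (u,v)" by (cases a)
    have "(u,v) \<in> iso n e'"
      using a a' na unfolding iso_def rem_def
      by (auto intro: adj_mono[rotated])
    then show False using e' by simp
  qed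
next
  fix a assume a: "a \<in> A"
  obtain u v where a': "a = (u,v)" by (cases a)
  have Asub: "A \<subseteq> pairs_in (Wset n e')" and Am: "is_matching A" using A by (auto simp: MA_def)
  have uv: "u < v" "universal n e' u" "universal n e' v" using Asub a a' by (auto simp: pairs_in_def Wset_def)
  have vn: "v < n" using uv by (simp add: universal_def)
  have "adj (rem e' A) y x" if y: "y = u \<or> y = v" and x: "x < n" "x \<noteq> u" "x \<noteq> v" for x y
  proof -
    have "adj e' y x" using uv y x by (auto simp: universal_def)
    moreover have "(min y x, max y x) \<notin> A"
    proof
      assume "(min y x, max y x) \<in> A"
      moreover have "(min y x, max y x) \<noteq> (u,v)" using x by (auto simp: min_def max_def)
      ultimately show False using matching_other[OF Am _ _] a a' y
        by (metis min_def max_def)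
    qed
    ultimately show ?thesis unfolding adj_def rem_def by (auto simp: min_def max_def split: if_splits)
  qed
  then show "a \<in> iso n (rem e' A)" using a a' uv vn unfolding iso_def rem_def by auto
qed

lemma Phi_rem:
  assumes e': "iso n e' = {}" and A: "A \<in> MA (Wset n e')"
  shows "Phi n (rem e' A) = e'"
proof -
  have "\<And>x. x \<in> A \<Longrightarrow> e' x"
  proof -
    fix x assume "x \<in> A"
    then have "x \<in> pairs_in (Wset n e')" using A by (auto simp: MA_def)
    then show "e' x" by (rule pairs_W_edges)
  qed
  then show ?thesis unfolding Phi_def iso_rem[OF assms] by (auto simp: rem_def fun_eq_iff)
qed


lemma finite_Om: "finite (Om n)"
proof -
  have "Om n \<subseteq> PiE_dflt (vertex_pairs n) False (\<lambda>_. UNIV)" by (auto simp: Om_def PiE_dflt_def)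
  moreover have "finite (PiE_dflt (vertex_pairs n) False (\<lambda>_. (UNIV :: bool set)))"
    using finite_vertex_pairs by (intro finite_PiE_dflt) auto
  ultimately show ?thesis by (rule finite_subset)
qed

lemma finite_MA: "finite S \<Longrightarrow> finite (MA S)"
  by (rule finite_subset[of _ "Pow (pairs_in S)"]) (auto simp: MA_def finite_pairs_in)

lemma MA_finite_elem: "finite S \<Longrightarrow> A \<in> MA S \<Longrightarrow> finite A"
  using finite_pairs_in finite_subset by (auto simp: MA_def)

lemma finite_Wset: "finite (Wset n e)"
  by (rule finite_subset[of _ "{..<n}"]) (auto simp: Wset_def universal_def)

lemma fiber:
  assumes e': "e' \<in> Phi n ` Om n"
  shows "{e \<in> Om n. Phi n e = e'} = rem e' ` MA (Wset n e')"
proof -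
  obtain e0 where e0: "e0 \<in> Om n" "e' = Phi n e0" using e' by auto
  have e'Om: "e' \<in> Om n" using e0 Phi_Om by simp
  have iso0: "iso n e' = {}" using e0 iso_Phi by simp
  show ?thesis
  proof (intro equalityI subsetI)
    fix e assume e: "e \<in> {e \<in> Om n. Phi n e = e'}"
    then have "e = rem e' (iso n e)" using rem_Phi[of n e] by auto
    moreover have "iso n e \<in> MA (Wset n e')"
      using e iso_W[of n e] iso_matching[of n e] by (auto simp: MA_def)
    ultimately show "e \<in> rem e' ` MA (Wset n e')" by blast
  next
    fix e assume "e \<in> rem e' ` MA (Wset n e')"
    then obtain A where A: "A \<in> MA (Wset n e')" "e = rem e' A" by auto
    then show "e \<in> {e \<in> Om n. Phi n e = e'}"
      using rem_Om[OF e'Om] Phi_rem[OF iso0 A(1)] by auto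
  qed
qed

lemma fiber_inj:
  assumes e': "e' \<in> Phi n ` Om n"
  shows "inj_on (rem e') (MA (Wset n e'))"
proof -
  have iso0: "iso n e' = {}" using e' iso_Phi by auto
  show ?thesis
    by (rule inj_onI) (metis iso_rem[OF iso0])
qed

lemma fiber_sum:
  fixes F :: "(nat \<times> nat \<Rightarrow> bool) \<Rightarrow> real"
  shows "(\<Sum>e\<in>Om n. F e) = (\<Sum>e'\<in>Phi n ` Om n. \<Sum>A\<in>MA (Wset n e'). F (rem e' A))"
proof -
  have "(\<Sum>e\<in>Om n. F e) = (\<Sum>e'\<in>Phi n ` Om n. \<Sum>e\<in>{e \<in> Om n. Phi n e = e'}. F e)"
    by (rule sum.group[symmetric]) (auto simp: finite_Om)
  also have "\<dots> = (\<Sum>e'\<in>Phi n ` Om n. \<Sum>A\<in>MA (Wset n e'). F (rem e' A))"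
  proof (rule sum.cong[OF refl])
    fix e' assume e': "e' \<in> Phi n ` Om n"
    show "(\<Sum>e\<in>{e \<in> Om n. Phi n e = e'}. F e) = (\<Sum>A\<in>MA (Wset n e'). F (rem e' A))"
      unfolding fiber[OF e'] by (rule sum.reindex[OF fiber_inj[OF e'], unfolded comp_def])
  qed
  finally show ?thesis .
qed

lemma pmf_Gnp:
  assumes p: "0 \<le> p" "p \<le> 1" and e: "e \<in> Om n"
  shows "pmf (Gnp n p) e = (\<Prod>x\<in>vertex_pairs n. if e x then p else 1 - p)"
  unfolding Gnp_def
  by (subst pmf_Pi'[OF finite_vertex_pairs]) (use e p in \<open>auto simp: Om_def intro!: prod.cong\<close>)

lemma pmf_rem:
  assumes p: "0 \<le> p" "p \<le> 1" and e: "e \<in> Om n" and A: "A \<subseteq> {x. e x}"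
  shows "pmf (Gnp n p) (rem e A) * p ^ card A = pmf (Gnp n p) e * (1 - p) ^ card A"
proof -
  have AV: "A \<subseteq> vertex_pairs n" using A e by (auto simp: Om_def)
  have finA: "finite A" using AV finite_vertex_pairs finite_subset by blast
  let ?f = "\<lambda>g x. if g x then p else 1 - p"
  have "pmf (Gnp n p) (rem e A) = (\<Prod>x\<in>vertex_pairs n - A. ?f (rem e A) x) * (\<Prod>x\<in>A. ?f (rem e A) x)"
    using pmf_Gnp[OF p rem_Om[OF e]] prod.subset_diff[OF AV finite_vertex_pairs] by simp
  also have "(\<Prod>x\<in>vertex_pairs n - A. ?f (rem e A) x) = (\<Prod>x\<in>vertex_pairs n - A. ?f e x)"
    by (rule prod.cong) (auto simp: rem_def)
  also have "(\<Prod>x\<in>A. ?f (rem e A) x) = (1 - p) ^ card A" by (simp add: rem_def)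
  finally have 1: "pmf (Gnp n p) (rem e A) = (\<Prod>x\<in>vertex_pairs n - A. ?f e x) * (1 - p) ^ card A" .
  have "pmf (Gnp n p) e = (\<Prod>x\<in>vertex_pairs n - A. ?f e x) * (\<Prod>x\<in>A. ?f e x)"
    using pmf_Gnp[OF p e] prod.subset_diff[OF AV finite_vertex_pairs] by simp
  also have "(\<Prod>x\<in>A. ?f e x) = (\<Prod>x\<in>A. p)" using A by (intro prod.cong) auto
  also have "\<dots> = p ^ card A" by simp
  finally have 2: "pmf (Gnp n p) e = (\<Prod>x\<in>vertex_pairs n - A. ?f e x) * p ^ card A" .
  show ?thesis unfolding 1 2 by (simp add: algebra_simps)
qed

lemma chi_rem:
  assumes fin: "finite A" and A: "A \<in> MA (Wset n e')"
  shows "chromatic_number n (rem e' A) + card A = chromatic_number n e'"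
  using fin A
proof (induction A rule: finite_induct)
  case empty
  have "rem e' {} = e'" by (simp add: rem_def)
  then show ?case by simp
next
  case (insert a A)
  obtain u v where a: "a = (u,v)" by (cases a)
  have Asub: "insert a A \<subseteq> pairs_in (Wset n e')" and Am: "is_matching (insert a A)"
    using insert.prems by (auto simp: MA_def)
  have AMA: "A \<in> MA (Wset n e')" using Asub Am unfolding MA_def is_matching_def by auto
  have uv: "u < v" "universal n e' u" "universal n e' v" using Asub a by (auto simp: pairs_in_def Wset_def)
  have vn: "v < n" using uv by (simp add: universal_def)
  have U: "universal n (rem e' A) y" if y: "y = u \<or> y = v" for y
    unfolding universal_def
  proof (intro conjI allI impI)
    show "y < n" using y uv vn by auto
  next
    fix x assume x: "x < n" "x \<noteq> y"
    have "adj e' y x" using uv y x by (auto simp: universal_def)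
    moreover have "(min y x, max y x) \<notin> A"
    proof
      assume m: "(min y x, max y x) \<in> A"
      then have "(min y x, max y x) \<noteq> (u,v)" using insert.hyps a by auto
      then show False using matching_other[OF Am, of u v "min y x" "max y x"] m a y x
        by (auto simp: min_def max_def split: if_splits)
    qed
    ultimately show "adj (rem e' A) y x" unfolding adj_def rem_def by (auto simp: min_def max_def split: if_splits)
  qed
  have eq: "rem e' (insert a A) = (rem e' A)((u,v) := False)" unfolding rem_def a by (auto simp: fun_eq_iff)
  have "chromatic_number n (rem e' (insert a A)) + 1 = chromatic_number n (rem e' A)"
    unfolding eq by (rule chi_remove[OF uv(1) vn U U]) auto
  then show ?case using insert.IH[OF AMA] insert.hyps by simp
qed

lemma card_match_le: "A \<in> MA S \<Longrightarrow> finite S \<Longrightarrow> card A \<le> card S"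
proof -
  assume A: "A \<in> MA S" and S: "finite S"
  have "inj_on fst A"
  proof (rule inj_onI)
    fix a b assume "a \<in> A" "b \<in> A" "fst a = fst b"
    then show "a = b" using A unfolding MA_def is_matching_def by blast
  qed
  moreover have "fst ` A \<subseteq> S" using A by (auto simp: MA_def pairs_in_def)
  ultimately show ?thesis using S card_inj_on_le by blast
qed

lemma sum_MA_card:
  fixes g :: "nat \<Rightarrow> real"
  assumes S: "finite S"
  shows "(\<Sum>A\<in>MA S. g (card A)) = (\<Sum>k\<le>card S. real (mc (card S) k) * g k)"
proof -
  have "(\<Sum>A\<in>MA S. g (card A)) = (\<Sum>k\<in>{..card S}. \<Sum>A\<in>{A\<in>MA S. card A = k}. g (card A))"
    by (rule sum.group[symmetric]) (use finite_MA[OF S] card_match_le S in auto)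
  also have "\<dots> = (\<Sum>k\<le>card S. real (mc (card S) k) * g k)"
  proof (rule sum.cong[OF refl])
    fix k
    have "{A\<in>MA S. card A = k} = Mat S k" by (auto simp: MA_def Mat_def)
    moreover have "(\<Sum>A\<in>Mat S k. g (card A)) = (\<Sum>A\<in>Mat S k. g k)"
      by (rule sum.cong) (auto simp: Mat_def)
    ultimately show "(\<Sum>A\<in>{A\<in>MA S. card A = k}. g (card A)) = real (mc (card S) k) * g k"
      using card_Mat[OF S, of k] by simp
  qed
  finally show ?thesis .
qed


lemma prob_sum:
  assumes p: "0 \<le> p" "p \<le> 1"
  shows "measure_pmf.prob (Gnp n p) T = (\<Sum>e\<in>Om n. pmf (Gnp n p) e * indicator T e)"
proof -
  have sub: "set_pmf (Gnp n p) \<subseteq> Om n"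
    unfolding Gnp_def using set_Pi_pmf_subset[OF finite_vertex_pairs, of n False "\<lambda>_. bernoulli_pmf p"]
    unfolding Om_def by blast
  have "measure_pmf.prob (Gnp n p) T = (\<integral>e. indicator T e \<partial>Gnp n p)" by simp
  also have "\<dots> = (\<Sum>e\<in>Om n. pmf (Gnp n p) e *\<^sub>R indicator T e)"
    by (rule integral_measure_pmf[OF finite_Om]) (use sub in auto)
  finally show ?thesis by simp
qed

lemma prob_bound:
  fixes w0 :: real and s L I :: nat
  assumes p: "0 < p" "p < 1"
    and s1: "1 \<le> s"
    and H2a: "2 * ((1-p)/p) * (16 * real s^2 + 3)^2 < w0" and H2b: "32 * real s^2 + 2 \<le> w0"
    and H3a: "8 * real s^2 + 2 * real s + 2 \<le> (w0/2) * (w0/2 - 1) * ((1-p)/p)"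
    and H3b: "16 * real s^2 + 4 * real s \<le> w0" and w04: "4 \<le> w0"
  shows "chi_prob n p {I .. I + L} \<le> real (L+1) * (4 / real s)
           + measure_pmf.prob (Gnp n p) {e. real (card (Wset n (Phi n e))) < w0}"
proof -
  define r where "r = (1-p)/p"
  have r0: "r > 0" using p by (simp add: r_def)
  define P where "P = pmf (Gnp n p)"
  define J where "J = {I .. I + L}"
  define bad where "bad = {e. real (card (Wset n (Phi n e))) < w0}"
  define \<beta> where "\<beta> = real (L+1) * (4 / real s)"
  have \<beta>0: "\<beta> \<ge> 0" by (simp add: \<beta>_def)
  have p01: "0 \<le> p" "p \<le> 1" using p by auto
  have P0: "P e \<ge> 0" for e by (simp add: P_def)
  have Prem: "P (rem e' A) = P e' * r ^ card A" if e': "e' \<in> Om n" and A: "A \<in> MA (Wset n e')" for e' A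
  proof -
    have "A \<subseteq> {x. e' x}"
    proof
      fix x assume "x \<in> A"
      then have "x \<in> pairs_in (Wset n e')" using A by (auto simp: MA_def)
      from pairs_W_edges[OF this] show "x \<in> {x. e' x}" by simp
    qed
    from pmf_rem[OF p01 e' this] have "P (rem e' A) * p ^ card A = P e' * (1 - p) ^ card A"
      by (simp add: P_def)
    then show ?thesis using p by (simp add: r_def power_divide field_simps)
  qed
  have inner: "(\<Sum>A\<in>MA (Wset n e'). P (rem e' A) * indicator {e. chromatic_number n e \<in> J} (rem e' A))
       \<le> \<beta> * (\<Sum>A\<in>MA (Wset n e'). P (rem e' A)) + (\<Sum>A\<in>MA (Wset n e'). P (rem e' A) * indicator bad (rem e' A))"
    if e': "e' \<in> Phi n ` Om n" for e'
  proof -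
    have e'Om: "e' \<in> Om n" using e' Phi_Om by auto
    have iso0: "iso n e' = {}" using e' iso_Phi by auto
    define S where "S = Wset n e'"
    have finS: "finite S" by (simp add: S_def finite_Wset)
    have Phirem: "Phi n (rem e' A) = e'" if "A \<in> MA S" for A using Phi_rem[OF iso0] that S_def by simp
    show ?thesis
    proof (cases "real (card S) < w0")
      case True
      have "(\<Sum>A\<in>MA S. P (rem e' A) * indicator bad (rem e' A)) = (\<Sum>A\<in>MA S. P (rem e' A))"
        by (rule sum.cong[OF refl]) (use True Phirem in \<open>auto simp: bad_def S_def\<close>)
      moreover have "(\<Sum>A\<in>MA S. P (rem e' A) * indicator {e. chromatic_number n e \<in> J} (rem e' A))
          \<le> (\<Sum>A\<in>MA S. P (rem e' A))"
        by (rule sum_mono) (simp add: P0 indicator_def)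
      moreover have "(\<Sum>A\<in>MA S. P (rem e' A)) \<ge> 0" by (simp add: sum_nonneg P0)
      ultimately show ?thesis unfolding S_def using \<beta>0 by (smt (verit) mult_nonneg_nonneg)
    next
      case False
      define w where "w = card S"
      have ww: "w0 \<le> real w" using False unfolding w_def by simp
      define \<chi>0 where "\<chi>0 = chromatic_number n e'"
      define K where "K = {k. k \<le> \<chi>0 \<and> \<chi>0 - k \<in> J}"
      have chiA: "chromatic_number n (rem e' A) = \<chi>0 - card A" "card A \<le> \<chi>0" if "A \<in> MA S" for A
        using chi_rem[OF MA_finite_elem[OF finS that] that[unfolded S_def]] \<chi>0_def by auto
      have "(\<Sum>A\<in>MA S. P (rem e' A) * indicator {e. chromatic_number n e \<in> J} (rem e' A))
          = (\<Sum>A\<in>MA S. P e' * (r ^ card A * indicator K (card A)))"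
      proof (rule sum.cong[OF refl])
        fix A assume A: "A \<in> MA S"
        show "P (rem e' A) * indicator {e. chromatic_number n e \<in> J} (rem e' A) = P e' * (r ^ card A * indicator K (card A))"
          using Prem[OF e'Om A[unfolded S_def]] chiA[OF A] by (simp add: K_def indicator_def)
      qed
      also have "\<dots> = P e' * (\<Sum>k\<le>w. real (mc w k) * (r ^ k * indicator K k))"
        unfolding sum_distrib_left[symmetric] w_def by (subst sum_MA_card[OF finS]) simp
      also have "(\<Sum>k\<le>w. real (mc w k) * (r ^ k * indicator K k)) = (\<Sum>k\<in>{..w} \<inter> K. real (mc w k) * r ^ k)"
        by (subst sum.inter_restrict) (auto simp: indicator_def intro!: sum.cong)
      also have "\<dots> \<le> (\<Sum>k\<in>{..w} \<inter> K. 4 / real s * (\<Sum>j\<le>w. real (mc w j) * r^j))"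
        by (rule sum_mono, rule anticonc[OF r0 s1 _ H2b _ H3b ww w04])
           (use H2a H3a in \<open>simp_all add: r_def\<close>)
      also have "\<dots> = real (card ({..w} \<inter> K)) * (4 / real s) * (\<Sum>j\<le>w. real (mc w j) * r^j)" by simp
      also have "\<dots> \<le> real (L+1) * (4 / real s) * (\<Sum>j\<le>w. real (mc w j) * r^j)"
      proof -
        have "card ({..w} \<inter> K) \<le> card J"
        proof (rule card_inj_on_le)
          show "inj_on (\<lambda>k. \<chi>0 - k) ({..w} \<inter> K)" by (rule inj_onI) (auto simp: K_def)
          show "(\<lambda>k. \<chi>0 - k) ` ({..w} \<inter> K) \<subseteq> J" by (auto simp: K_def)
        qed (simp add: J_def)
        then have "real (card ({..w} \<inter> K)) \<le> real (L+1)" by (simp add: J_def)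
        moreover have "(\<Sum>j\<le>w. real (mc w j) * r^j) \<ge> 0" using r0 by (intro sum_nonneg) simp
        ultimately show ?thesis by (intro mult_right_mono) auto
      qed
      finally have 1: "(\<Sum>A\<in>MA S. P (rem e' A) * indicator {e. chromatic_number n e \<in> J} (rem e' A))
          \<le> P e' * (\<beta> * (\<Sum>j\<le>w. real (mc w j) * r^j))"
        using P0[of e'] unfolding \<beta>_def by (simp add: mult_left_mono mult.assoc)
      have 2: "(\<Sum>A\<in>MA S. P (rem e' A)) = P e' * (\<Sum>j\<le>w. real (mc w j) * r^j)"
      proof -
        have "(\<Sum>A\<in>MA S. P (rem e' A)) = (\<Sum>A\<in>MA S. P e' * r ^ card A)"
          by (rule sum.cong[OF refl]) (use Prem e'Om S_def in auto)
        also have "\<dots> = P e' * (\<Sum>A\<in>MA S. r ^ card A)" by (simp add: sum_distrib_left)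
        also have "(\<Sum>A\<in>MA S. r ^ card A) = (\<Sum>j\<le>w. real (mc w j) * r^j)"
          unfolding w_def by (rule sum_MA_card[OF finS])
        finally show ?thesis .
      qed
      have 3: "(\<Sum>A\<in>MA S. P (rem e' A) * indicator bad (rem e' A)) \<ge> 0"
        by (intro sum_nonneg) (simp add: P0)
      show ?thesis using 1 2 3 unfolding S_def by (simp add: algebra_simps)
    qed
  qed
  have "chi_prob n p J = (\<Sum>e\<in>Om n. P e * indicator {e. chromatic_number n e \<in> J} e)"
    unfolding chi_prob_def P_def by (rule prob_sum[OF p01])
  also have "\<dots> = (\<Sum>e'\<in>Phi n ` Om n. \<Sum>A\<in>MA (Wset n e'). P (rem e' A) * indicator {e. chromatic_number n e \<in> J} (rem e' A))"
    by (rule fiber_sum)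
  also have "\<dots> \<le> (\<Sum>e'\<in>Phi n ` Om n. \<beta> * (\<Sum>A\<in>MA (Wset n e'). P (rem e' A)) + (\<Sum>A\<in>MA (Wset n e'). P (rem e' A) * indicator bad (rem e' A)))"
    by (rule sum_mono) (rule inner)
  also have "\<dots> = \<beta> * (\<Sum>e'\<in>Phi n ` Om n. \<Sum>A\<in>MA (Wset n e'). P (rem e' A)) + (\<Sum>e'\<in>Phi n ` Om n. \<Sum>A\<in>MA (Wset n e'). P (rem e' A) * indicator bad (rem e' A))"
    by (simp add: sum.distrib sum_distrib_left)
  also have "(\<Sum>e'\<in>Phi n ` Om n. \<Sum>A\<in>MA (Wset n e'). P (rem e' A)) = (\<Sum>e\<in>Om n. P e)"
    by (rule fiber_sum[symmetric])
  also have "(\<Sum>e\<in>Om n. P e) = 1"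
    using prob_sum[OF p01, of n UNIV] by (simp add: P_def)
  also have "(\<Sum>e'\<in>Phi n ` Om n. \<Sum>A\<in>MA (Wset n e'). P (rem e' A) * indicator bad (rem e' A)) = (\<Sum>e\<in>Om n. P e * indicator bad e)"
    by (rule fiber_sum[symmetric])
  also have "(\<Sum>e\<in>Om n. P e * indicator bad e) = measure_pmf.prob (Gnp n p) bad"
    unfolding P_def by (rule prob_sum[OF p01, symmetric])
  finally show ?thesis unfolding J_def \<beta>_def bad_def by simp
qed


lemma Wset_Phi: "card (Wset n e) \<le> card (Wset n (Phi n e))"
  by (rule card_mono[OF finite_Wset]) (auto simp: Wset_def intro: univ_mono[rotated] simp: Phi_def)

lemma Wset_upd:
  assumes x: "x \<in> vertex_pairs n"
  shows "Wset n (g(x:=False)) \<subseteq> Wset n (g(x:=True))"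
    and "Wset n (g(x:=True)) \<subseteq> Wset n (g(x:=False)) \<union> {fst x, snd x}"
proof -
  show "Wset n (g(x:=False)) \<subseteq> Wset n (g(x:=True))"
    unfolding Wset_def by (auto intro: univ_mono[rotated] split: if_splits)
  show "Wset n (g(x:=True)) \<subseteq> Wset n (g(x:=False)) \<union> {fst x, snd x}"
  proof
    fix u assume u: "u \<in> Wset n (g(x:=True))"
    show "u \<in> Wset n (g(x:=False)) \<union> {fst x, snd x}"
    proof (cases "u = fst x \<or> u = snd x")
      case False
      have "adj (g(x:=False)) u y = adj (g(x:=True)) u y" for y
        using False unfolding adj_def by (cases x) auto
      then have "universal n (g(x:=False)) u" using u by (simp add: Wset_def universal_def)
      then show ?thesis by (simp add: Wset_def)
    qed auto
  qed
qed

lemma X_lipschitz: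
  assumes x: "x \<in> vertex_pairs n"
  shows "\<bar>real (card (Wset n (g(x:=True)))) - real (card (Wset n (g(x:=False))))\<bar> \<le> 2"
proof -
  have a: "card (Wset n (g(x:=False))) \<le> card (Wset n (g(x:=True)))"
    by (rule card_mono[OF finite_Wset Wset_upd(1)[OF x]])
  have "card (Wset n (g(x:=True))) \<le> card (Wset n (g(x:=False)) \<union> {fst x, snd x})"
    by (rule card_mono[OF _ Wset_upd(2)[OF x]]) (simp add: finite_Wset)
  also have "\<dots> \<le> card (Wset n (g(x:=False))) + card {fst x, snd x}" by (rule card_Un_le)
  also have "card {fst x, snd x} \<le> 2" by (simp add: card_insert_le_m1)
  finally show ?thesis using a by linarith
qed

lemma var_X:
  assumes "0 \<le> p" "p \<le> 1"
  shows "Var_pmf (Gnp n p) (\<lambda>e. real (card (Wset n e))) \<le> 4 * real n ^ 2 * (1 - p)"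
proof -
  have "Var_pmf (Gnp n p) (\<lambda>e. real (card (Wset n e))) \<le> real (card (vertex_pairs n)) * (p*(1-p)) * 2^2"
    unfolding Gnp_def by (rule efron_stein[OF finite_vertex_pairs assms]) (rule X_lipschitz)
  also have "\<dots> \<le> 4 * real n ^ 2 * (1 - p)"
  proof -
    have "real (card (vertex_pairs n)) \<le> real n ^ 2" using card_vertex_pairs by (metis of_nat_le_iff of_nat_power)
    moreover have "p * (1-p) \<le> 1 - p" using assms by (simp add: mult_left_le_one_le)
    ultimately have "real (card (vertex_pairs n)) * (p*(1-p)) \<le> real n ^ 2 * (1 - p)"
      using assms by (intro mult_mono) auto
    then have "real (card (vertex_pairs n)) * (p*(1-p)) * 2^2 \<le> real n ^ 2 * (1 - p) * 2^2"
      by (rule mult_right_mono) simp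
    also have "real n ^ 2 * (1 - p) * 2^2 = 4 * real n ^ 2 * (1 - p)" by simp
    finally show ?thesis .
  qed
  finally show ?thesis .
qed

lemma prob_universal:
  assumes p: "0 \<le> p" "p \<le> 1" and u: "u < n"
  shows "measure_pmf.prob (Gnp n p) {e. universal n e u} \<ge> p ^ n"
proof -
  define B where "B = (\<lambda>y. (min u y, max u y)) ` {y. y < n \<and> y \<noteq> u}"
  have BV: "B \<subseteq> vertex_pairs n" using u by (auto simp: B_def vertex_pairs_def min_def max_def)
  have cB: "card B \<le> n"
  proof -
    have "card B \<le> card {y. y < n \<and> y \<noteq> u}" unfolding B_def by (rule card_image_le) simp
    also have "\<dots> \<le> card {..<n}" by (rule card_mono) auto
    finally show ?thesis by simp
  qed
  have sub: "Pi (vertex_pairs n) (\<lambda>x. if x \<in> B then {True} else UNIV) \<subseteq> {e. universal n e u}"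
  proof
    fix e assume e: "e \<in> Pi (vertex_pairs n) (\<lambda>x. if x \<in> B then {True} else UNIV)"
    have "e x" if "x \<in> B" for x using e that BV by (cases x) (auto simp: Pi_def split: if_splits)
    then have "adj e u y" if "y < n" "y \<noteq> u" for y
    proof -
      have "(min u y, max u y) \<in> B" using that by (auto simp: B_def)
      then have "e (min u y, max u y)" using \<open>\<And>x. x \<in> B \<Longrightarrow> e x\<close> by blast
      then show ?thesis using that unfolding adj_def by (auto simp: min_def max_def)
    qed
    then show "e \<in> {e. universal n e u}" using u by (simp add: universal_def)
  qed
  have "measure_pmf.prob (Gnp n p) (Pi (vertex_pairs n) (\<lambda>x. if x \<in> B then {True} else UNIV))
      = (\<Prod>x\<in>vertex_pairs n. measure_pmf.prob (bernoulli_pmf p) (if x \<in> B then {True} else UNIV))"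
    unfolding Gnp_def by (rule measure_Pi_pmf_Pi[OF finite_vertex_pairs])
  also have "\<dots> = (\<Prod>x\<in>vertex_pairs n. if x \<in> B then p else 1)"
    by (rule prod.cong) (use p in \<open>auto simp: measure_pmf_single\<close>)
  also have "\<dots> = p ^ card (vertex_pairs n \<inter> B)"
    by (subst prod.If_cases[OF finite_vertex_pairs]) simp
  also have "vertex_pairs n \<inter> B = B" using BV by auto
  finally have eq: "measure_pmf.prob (Gnp n p) (Pi (vertex_pairs n) (\<lambda>x. if x \<in> B then {True} else UNIV)) = p ^ card B" .
  have "p ^ n \<le> p ^ card B" by (rule power_decreasing[OF cB p])
  also have "\<dots> \<le> measure_pmf.prob (Gnp n p) {e. universal n e u}"
    unfolding eq[symmetric] by (rule measure_pmf.finite_measure_mono[OF sub]) simp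
  finally show ?thesis .
qed

lemma card_Wset_sum: "real (card (Wset n e)) = (\<Sum>u<n. indicator {e. universal n e u} e)"
proof -
  have "(\<Sum>u<n. indicator {e. universal n e u} e) = (\<Sum>u\<in>{..<n}. (indicator (Wset n e) u :: real))"
    by (rule sum.cong) (auto simp: indicator_def Wset_def)
  also have "\<dots> = real (card ({..<n} \<inter> Wset n e))" by (simp add: indicator_def sum.If_cases)
  also have "{..<n} \<inter> Wset n e = Wset n e" by (auto simp: Wset_def universal_def)
  finally show ?thesis by simp
qed

lemma exp_X:
  assumes p: "0 \<le> p" "p \<le> 1"
  shows "(\<integral>e. real (card (Wset n e)) \<partial>Gnp n p) \<ge> real n * p ^ n"
proof -
  have "(\<integral>e. real (card (Wset n e)) \<partial>Gnp n p) = (\<integral>e. (\<Sum>u<n. indicator {e. universal n e u} e) \<partial>Gnp n p)"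
    by (simp only: card_Wset_sum)
  also have "\<dots> = (\<Sum>u<n. (\<integral>e. indicator {e. universal n e u} e \<partial>Gnp n p))"
    by (rule Bochner_Integration.integral_sum[of "{..<n}" "Gnp n p" "\<lambda>u e. indicator {e. universal n e u} e"])
       (simp add: integrable_measure_pmf_finite finite_Gnp)
  also have "\<dots> = (\<Sum>u<n. measure_pmf.prob (Gnp n p) {e. universal n e u})" by simp
  also have "\<dots> \<ge> (\<Sum>u<n. p ^ n)" by (rule sum_mono) (rule prob_universal[OF p], simp)
  finally show ?thesis by simp
qed

lemma prob_X_small:
  assumes p: "0 < p" "p \<le> 1" and n: "n \<ge> 1"
  shows "measure_pmf.prob (Gnp n p) {e. real (card (Wset n e)) < real n * p ^ n / 2} \<le> 16 * (1 - p) / p ^ (2*n)"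
proof -
  define X where "X e = real (card (Wset n e))" for e
  define m where "m = (\<integral>e. X e \<partial>Gnp n p)"
  define t where "t = real n * p ^ n / 2"
  have p01: "0 \<le> p" "p \<le> 1" using p by auto
  have t0: "t > 0" using p n by (simp add: t_def)
  have mt: "m \<ge> 2 * t" using exp_X[OF p01, of n] by (simp add: m_def X_def t_def)
  have "{e. X e < t} \<subseteq> {e. t \<le> \<bar>X e - m\<bar>}" using mt by auto
  then have "measure_pmf.prob (Gnp n p) {e. X e < t} \<le> measure_pmf.prob (Gnp n p) {e. t \<le> \<bar>X e - m\<bar>}"
    by (rule measure_pmf.finite_measure_mono) simp
  also have "\<dots> \<le> Var_pmf (Gnp n p) X / t^2" unfolding m_def by (rule cheb_pmf[OF finite_Gnp t0])
  also have "\<dots> \<le> 4 * real n ^ 2 * (1 - p) / t^2"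
    using var_X[OF p01, of n] t0 unfolding X_def by (simp add: divide_right_mono)
  also have "4 * real n ^ 2 * (1 - p) / t^2 = 16 * (1 - p) / p ^ (2*n)"
  proof -
    have pp: "p ^ (2*n) = p^n * p^n" by (simp add: mult_2 power_add)
    show ?thesis using p n unfolding t_def pp by (simp add: field_simps power2_eq_square)
  qed
  finally show ?thesis unfolding X_def t_def .
qed


lemma AC_hyps:
  fixes Dp \<sigma> w0 r :: real and s :: nat
  assumes Dp: "Dp \<ge> 1" and \<sigma>0: "\<sigma> > 0" and \<sigma>a: "\<sigma>^2 * Dp \<le> 1/10000" and \<sigma>b: "\<sigma>^4 * Dp^3 \<le> 1/100000000"
    and \<sigma>c: "\<sigma>^2 \<le> 1/100"
    and r: "r > 0" and w04: "w0 \<ge> 4" and wr: "w0 * r \<le> Dp" and s1: "1 \<le> s"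
    and ss: "real s \<le> \<sigma> * w0 * sqrt r"
  shows "2 * r * (16 * real s^2 + 3)^2 < w0" and "32 * real s^2 + 2 \<le> w0"
    and "8 * real s^2 + 2 * real s + 2 \<le> (w0/2) * (w0/2 - 1) * r"
    and "16 * real s^2 + 4 * real s \<le> w0"
proof -
  define T where "T = \<sigma>^2 * w0^2 * r"
  have s2T: "real s^2 \<le> T"
  proof -
    have "real s^2 \<le> (\<sigma> * w0 * sqrt r)^2" using ss by (intro power_mono) auto
    also have "\<dots> = T" using r by (simp add: T_def power_mult_distrib)
    finally show ?thesis .
  qed
  have sge: "real s^2 \<ge> real s" "real s \<ge> 1" using s1 by (auto simp: power2_eq_square)
  have w0r: "w0^2 * r \<le> w0 * Dp"
  proof -
    have "w0^2 * r = w0 * (w0 * r)" by (simp add: power2_eq_square)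
    also have "\<dots> \<le> w0 * Dp" using wr w04 by (intro mult_left_mono) auto
    finally show ?thesis .
  qed
  have T1: "T \<le> w0 / 10000"
  proof -
    have "T = \<sigma>^2 * (w0^2 * r)" by (simp add: T_def)
    also have "\<dots> \<le> \<sigma>^2 * (w0 * Dp)" using w0r by (intro mult_left_mono) auto
    also have "\<dots> = (\<sigma>^2 * Dp) * w0" by simp
    also have "\<dots> \<le> (1/10000) * w0" using \<sigma>a w04 by (intro mult_right_mono) auto
    finally show ?thesis by simp
  qed
  show "32 * real s^2 + 2 \<le> w0" using s2T T1 sge by linarith
  show "16 * real s^2 + 4 * real s \<le> w0" using s2T T1 sge by linarith
  show "8 * real s^2 + 2 * real s + 2 \<le> (w0/2) * (w0/2 - 1) * r"
  proof -
    have "8 * real s^2 + 2 * real s + 2 \<le> 12 * T" using s2T sge by linarith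
    also have "12 * T \<le> (1/8) * (w0^2 * r)"
    proof -
      have "12 * T = (12 * \<sigma>^2) * (w0^2 * r)" by (simp add: T_def)
      also have "\<dots> \<le> (1/8) * (w0^2 * r)" using \<sigma>c r by (intro mult_right_mono) auto
      finally show ?thesis .
    qed
    also have "(1/8) * (w0^2 * r) \<le> (w0/2) * (w0/2 - 1) * r"
    proof -
      have "4 * w0 \<le> w0 * w0" using w04 by (intro mult_right_mono) auto
      then have h: "(1/8) * w0^2 \<le> (w0/2) * (w0/2 - 1)" by (simp add: power2_eq_square algebra_simps)
      have "(1/8) * w0^2 * r \<le> (w0/2) * (w0/2 - 1) * r" by (rule mult_right_mono[OF h]) (use r in simp)
      then show ?thesis by (simp only: mult.assoc)
    qed
    finally show ?thesis .
  qed
  show "2 * r * (16 * real s^2 + 3)^2 < w0"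
  proof -
    have a: "16 * real s^2 + 3 \<le> 19 * T" using s2T sge by linarith
    have "(16 * real s^2 + 3)^2 \<le> (19 * T)^2" using a sge by (intro power_mono) auto
    then have "2 * r * (16 * real s^2 + 3)^2 \<le> 2 * r * (19 * T)^2" using r by simp
    also have "2 * r * (19 * T)^2 = 722 * (\<sigma>^4 * (w0 * r)^3) * w0"
      unfolding T_def by (simp add: power2_eq_square power3_eq_cube power4_eq_xxxx algebra_simps)
    also have "\<dots> \<le> 722 * (\<sigma>^4 * Dp^3) * w0"
    proof -
      have "(w0 * r)^3 \<le> Dp^3" using wr w04 r by (intro power_mono) auto
      then show ?thesis using w04 by (intro mult_right_mono mult_left_mono) auto
    qed
    also have "\<dots> \<le> 722 * (1/100000000) * w0" using \<sigma>b w04 by (intro mult_right_mono mult_left_mono) auto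
    also have "\<dots> < w0" using w04 by simp
    finally show ?thesis .
  qed
qed

lemma sigma_facts:
  fixes Dp :: real assumes Dp: "Dp \<ge> 1"
  defines "\<sigma> \<equiv> 1 / (100 * (Dp + 1)^2)"
  shows "\<sigma> > 0" "\<sigma>^2 * Dp \<le> 1/10000" "\<sigma>^4 * Dp^3 \<le> 1/100000000" "\<sigma>^2 \<le> 1/100"
proof -
  have D1: "Dp + 1 \<ge> 1" using Dp by simp
  show "\<sigma> > 0" unfolding \<sigma>_def using Dp by simp
  define X where "X = (Dp+1)^4"
  have s2: "\<sigma>^2 = 1 / (10000 * X)" unfolding \<sigma>_def X_def by (simp add: power_mult_distrib power_divide flip: power_mult)
  have XD: "X \<ge> Dp"
  proof -
    have "Dp \<le> Dp + 1" by simp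
    also have "\<dots> \<le> (Dp+1)^4" using D1 by (rule self_le_power) simp
    finally show ?thesis by (simp add: X_def)
  qed
  have X1: "X \<ge> 1" using D1 by (simp add: X_def one_le_power)
  have "\<sigma>^2 * Dp = Dp / (10000 * X)" using s2 by simp
  also have "\<dots> \<le> X / (10000 * X)" using XD X1 by (intro divide_right_mono) auto
  also have "\<dots> = 1/10000" using X1 by simp
  finally show "\<sigma>^2 * Dp \<le> 1/10000" .
  have "\<sigma>^2 = 1 / (10000 * X)" by (rule s2)
  also have "\<dots> \<le> 1 / 10000" using X1 by (simp add: field_simps)
  finally show "\<sigma>^2 \<le> 1/100" by simp
  define Y where "Y = (Dp+1)^8"
  have s4: "\<sigma>^4 = 1 / (100000000 * Y)" unfolding \<sigma>_def Y_def by (simp add: power_mult_distrib power_divide flip: power_mult)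
  have YD: "Y \<ge> Dp^3"
  proof -
    have "Dp^3 \<le> (Dp+1)^3" using Dp by (intro power_mono) auto
    also have "\<dots> \<le> (Dp+1)^8" by (rule power_increasing[OF _ D1]) simp
    finally show ?thesis by (simp add: Y_def)
  qed
  have Y1: "Y \<ge> 1" using D1 by (simp add: Y_def one_le_power)
  have "\<sigma>^4 * Dp^3 = Dp^3 / (100000000 * Y)" using s4 by simp
  also have "\<dots> \<le> Y / (100000000 * Y)" using YD Y1 by (intro divide_right_mono) auto
  also have "\<dots> = 1/100000000" using Y1 by simp
  finally show "\<sigma>^4 * Dp^3 \<le> 1/100000000" .
qed

lemma pow_lower:
  fixes q :: real and n :: nat and D :: real
  assumes q: "0 \<le> q" "q \<le> 1/2" and qn: "q * real n \<le> D"
  shows "(1 - q)^n \<ge> exp (-2 * D)"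
proof -
  have l: "ln (1 - q) \<ge> - 2 * q"
  proof -
    have "- q - 2 * q^2 \<le> ln (1 - q)" by (rule ln_one_minus_pos_lower_bound) (use q in auto)
    moreover have "2 * q^2 \<le> q"
    proof -
      have "q * (2 * q) \<le> q * 1" using q by (intro mult_left_mono) auto
      then show ?thesis by (simp add: power2_eq_square algebra_simps)
    qed
    ultimately show ?thesis by linarith
  qed
  have "(1 - q)^n = exp (real n * ln (1 - q))" using q by (simp add: exp_of_nat_mult exp_ln)
  also have "real n * ln (1 - q) \<ge> real n * (- 2 * q)" using l by (intro mult_left_mono) auto
  then have "exp (real n * ln (1 - q)) \<ge> exp (-2 * (q * real n))" by (simp add: algebra_simps)
  moreover have "exp (-2 * (q * real n)) \<ge> exp (-2 * D)" using qn by simp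
  ultimately show ?thesis by linarith
qed


lemma part2_n:
  fixes D \<epsilon> c \<sigma> \<beta> :: real and n :: nat and p :: real and I :: nat
  assumes D: "0 < D" and \<epsilon>: "0 < \<epsilon>"
    and \<beta>def: "\<beta> = exp (-2 * (D+1))"
    and \<sigma>def: "\<sigma> = 1 / (100 * (2 * (D+1) + 1)^2)"
    and cdef: "c = \<epsilon> * \<sigma> * \<beta> / 64"
    and q0: "0 < 1 - p" and p1: "p \<le> 1" and qD: "(1 - p) * real n \<le> D + 1"
    and nbig: "real n \<ge> 2 * (D+1)" "real n \<ge> 8 / \<beta>" "real n \<ge> 32 * (D+1) / (\<epsilon> * \<beta>^2)"
    and zbig: "real n * sqrt (1 - p) \<ge> 4 / (\<sigma> * \<beta>)" "real n * sqrt (1 - p) \<ge> 64 / (\<sigma> * \<beta> * \<epsilon>)"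
  shows "chi_prob n p {I .. I + nat \<lfloor>c * real n * sqrt (1 - p)\<rfloor>} \<le> \<epsilon>"
proof -
  define q where "q = 1 - p"
  define Dp where "Dp = 2 * (D+1)"
  define z where "z = real n * sqrt q"
  have q0': "q > 0" using q0 by (simp add: q_def)
  have \<beta>0: "\<beta> > 0" "\<beta> \<le> 1" using \<beta>def D by auto
  have Dp1: "Dp \<ge> 1" using D by (simp add: Dp_def)
  have \<sigma>f: "\<sigma> > 0" "\<sigma>^2 * Dp \<le> 1/10000" "\<sigma>^4 * Dp^3 \<le> 1/100000000" "\<sigma>^2 \<le> 1/100"
    using sigma_facts[OF Dp1] unfolding \<sigma>def Dp_def by auto
  have n0: "real n > 0" using nbig(1) D by (smt (verit))
  have qn: "q * real n \<le> D + 1" using qD by (simp add: q_def)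
  have qh: "q \<le> 1/2"
  proof -
    have "D + 1 \<le> real n / 2" using nbig(1) by simp
    from order_trans[OF qn this] have "q * real n \<le> real n / 2" .
    then show ?thesis using n0 by (simp add: field_simps)
  qed
  have pgt: "p \<ge> 1/2" "p > 0" "p < 1" using qh q0' by (auto simp: q_def)
  have pn: "p ^ n \<ge> \<beta>"
    using pow_lower[of q n "D+1"] q0' qh qn unfolding \<beta>def q_def by simp
  define r where "r = q / p"
  have r0: "r > 0" using q0' pgt by (simp add: r_def)
  have rq: "q \<le> r" "r \<le> 2 * q"
  proof -
    show "q \<le> r" unfolding r_def using pgt q0' p1 by (simp add: field_simps mult_left_le_one_le)
    show "r \<le> 2 * q" unfolding r_def using pgt q0' by (simp add: field_simps)
  qed
  define w0 where "w0 = real n * \<beta> / 2"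
  have w04: "w0 \<ge> 4"
  proof -
    have "real n * \<beta> \<ge> (8 / \<beta>) * \<beta>" using nbig(2) \<beta>0 by (intro mult_right_mono) auto
    then show ?thesis using \<beta>0 by (simp add: w0_def)
  qed
  have w0n: "w0 \<le> real n" using \<beta>0 n0 by (simp add: w0_def)
  have w0r: "w0 * r \<le> Dp"
  proof -
    have "w0 * r \<le> real n * (2 * q)" using w0n rq r0 n0 by (intro mult_mono) auto
    also have "\<dots> \<le> 2 * (D + 1)" using qn by (simp add: algebra_simps)
    finally show ?thesis by (simp add: Dp_def)
  qed
  define y where "y = \<sigma> * w0 * sqrt r"
  have y0: "y \<ge> 0" using \<sigma>f(1) w04 r0 by (simp add: y_def)
  define s where "s = nat \<lfloor>y\<rfloor>"
  have sy: "real s \<le> y" "real s \<ge> y - 1" using y0 by (simp_all add: s_def)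
  define t where "t = \<sigma> * \<beta> * z"
  have yz: "y \<ge> t / 2"
  proof -
    have "sqrt q \<le> sqrt r" using rq by simp
    then have "\<sigma> * w0 * sqrt q \<le> \<sigma> * w0 * sqrt r" using \<sigma>f(1) w04 by (intro mult_left_mono) auto
    then show ?thesis by (simp add: y_def w0_def z_def t_def algebra_simps)
  qed
  have z0: "z > 0" using n0 q0' by (simp add: z_def)
  have zb1: "t / 4 \<ge> 1"
  proof -
    have "z * (\<sigma> * \<beta>) \<ge> (4 / (\<sigma> * \<beta>)) * (\<sigma> * \<beta>)"
      using zbig(1) \<sigma>f(1) \<beta>0 unfolding z_def q_def by (intro mult_right_mono) auto
    then show ?thesis using \<sigma>f(1) \<beta>0 by (simp add: field_simps t_def)
  qed
  have s_low: "real s \<ge> t / 4" using sy yz zb1 by linarith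
  have s1r: "1 \<le> real s" using s_low zb1 by linarith
  then have s1: "1 \<le> s" by simp
  have H: "2 * r * (16 * real s^2 + 3)^2 < w0" "32 * real s^2 + 2 \<le> w0"
     "8 * real s^2 + 2 * real s + 2 \<le> (w0/2) * (w0/2 - 1) * r" "16 * real s^2 + 4 * real s \<le> w0"
    using AC_hyps[OF Dp1 \<sigma>f(1) \<sigma>f(2) \<sigma>f(3) \<sigma>f(4) r0 w04 w0r s1] sy(1) unfolding y_def by auto
  have rr: "r = (1 - p) / p" by (simp add: r_def q_def)
  define L where "L = nat \<lfloor>c * real n * sqrt (1 - p)\<rfloor>"
  have PB: "chi_prob n p {I .. I + L} \<le> real (L+1) * (4 / real s)
           + measure_pmf.prob (Gnp n p) {e. real (card (Wset n (Phi n e))) < w0}"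
    by (rule prob_bound[OF pgt(2) pgt(3) s1 _ H(2) _ H(4) w04]) (use H rr in auto)
  have c0: "c > 0" unfolding cdef using \<epsilon> \<sigma>f(1) \<beta>0 by simp
  have A: "real (L+1) * (4 / real s) \<le> \<epsilon> / 2"
  proof -
    have cz: "c * real n * sqrt (1 - p) = c * z" by (simp add: z_def q_def)
    have L1: "real L \<le> c * z" unfolding L_def cz using c0 z0 by simp
    have "real (L+1) * (4 / real s) \<le> (c * z + 1) * (4 / (t / 4))"
    proof (rule mult_mono)
      show "real (L+1) \<le> c * z + 1" using L1 by simp
      show "4 / real s \<le> 4 / (t / 4)" using s_low zb1 by (intro divide_left_mono) auto
      show "0 \<le> c * z + 1" using c0 z0 by simp
    qed simp
    also have "\<dots> = 16 * c / (\<sigma> * \<beta>) + 16 / (\<sigma> * \<beta> * z)"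
      using \<sigma>f(1) \<beta>0 z0 by (simp add: field_simps t_def)
    also have "16 * c / (\<sigma> * \<beta>) = \<epsilon> / 4" using \<sigma>f(1) \<beta>0 by (simp add: cdef field_simps)
    also have "16 / (\<sigma> * \<beta> * z) \<le> \<epsilon> / 4"
    proof -
      have "z \<ge> 64 / (\<sigma> * \<beta> * \<epsilon>)" using zbig(2) by (simp add: z_def q_def)
      then have "z * (\<sigma> * \<beta> * \<epsilon>) \<ge> 64" using \<sigma>f(1) \<beta>0 \<epsilon> by (simp add: field_simps)
      then show ?thesis using \<sigma>f(1) \<beta>0 z0 \<epsilon> by (simp add: field_simps)
    qed
    finally show ?thesis by simp
  qed
  have B: "measure_pmf.prob (Gnp n p) {e. real (card (Wset n (Phi n e))) < w0} \<le> \<epsilon> / 2"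
  proof -
    have sub: "{e. real (card (Wset n (Phi n e))) < w0} \<subseteq> {e. real (card (Wset n e)) < real n * p ^ n / 2}"
    proof
      fix e assume "e \<in> {e. real (card (Wset n (Phi n e))) < w0}"
      moreover have "real (card (Wset n e)) \<le> real (card (Wset n (Phi n e)))" using Wset_Phi by simp
      moreover have "w0 \<le> real n * p ^ n / 2" using pn n0 by (simp add: w0_def)
      ultimately show "e \<in> {e. real (card (Wset n e)) < real n * p ^ n / 2}" by simp
    qed
    have n1: "n \<ge> 1" using n0 by simp
    have "measure_pmf.prob (Gnp n p) {e. real (card (Wset n (Phi n e))) < w0}
        \<le> measure_pmf.prob (Gnp n p) {e. real (card (Wset n e)) < real n * p ^ n / 2}"
      by (rule measure_pmf.finite_measure_mono[OF sub]) simp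
    also have "\<dots> \<le> 16 * (1 - p) / p ^ (2*n)" by (rule prob_X_small[OF pgt(2) p1 n1])
    also have "\<dots> \<le> 16 * q / \<beta>^2"
    proof -
      have "\<beta>^2 \<le> (p^n)^2" using pn \<beta>0 by (intro power_mono) auto
      also have "(p^n)^2 = p ^ (2*n)" by (simp add: power_mult[symmetric] mult.commute)
      finally have "\<beta>^2 \<le> p ^ (2*n)" .
      then show ?thesis using \<beta>0 q0' pgt(2) unfolding q_def by (intro divide_left_mono) auto
    qed
    also have "\<dots> \<le> \<epsilon> / 2"
    proof -
      have "q * real n \<le> D + 1" by (rule qn)
      moreover have "(D+1) \<le> real n * (\<epsilon> * \<beta>^2) / 32"
        using nbig(3) \<epsilon> \<beta>0 by (simp add: field_simps)
      ultimately have "q * real n \<le> (\<epsilon> * \<beta>^2 / 32) * real n" by (simp add: algebra_simps)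
      then have "q \<le> \<epsilon> * \<beta>^2 / 32" using n0 by simp
      then show ?thesis using \<beta>0 by (simp add: field_simps)
    qed
    finally show ?thesis .
  qed
  have fin: "chi_prob n p {I .. I + L} \<le> \<epsilon>" using PB A B by linarith
  then show ?thesis unfolding L_def .
qed


lemma part2:
  fixes D \<epsilon> :: real
  assumes D: "0 < D" and \<epsilon>: "0 < \<epsilon>"
  shows "\<exists>c > 0. \<forall>p :: nat \<Rightarrow> real. edge_prob_regime D p \<longrightarrow>
        (\<forall>I :: nat \<Rightarrow> nat. \<exists>\<delta> :: nat \<Rightarrow> real. \<delta> \<longlonglongrightarrow> 0 \<and>
           (\<forall>n. chi_prob n (p n)
                  {I n .. I n + nat \<lfloor>c * real n * sqrt (1 - p n)\<rfloor>} \<le> \<epsilon> + \<delta> n))"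
proof -
  define \<beta> :: real where "\<beta> = exp (-2 * (D+1))"
  define \<sigma> :: real where "\<sigma> = 1 / (100 * (2 * (D+1) + 1)^2)"
  define c where "c = \<epsilon> * \<sigma> * \<beta> / 64"
  have \<beta>0: "\<beta> > 0" by (simp add: \<beta>_def)
  have \<sigma>0: "\<sigma> > 0" using D by (simp add: \<sigma>_def)
  have c0: "c > 0" unfolding c_def using \<epsilon> \<sigma>0 \<beta>0 by simp
  have main: "\<forall>\<^sub>F n in sequentially. chi_prob n (p n) {I n .. I n + nat \<lfloor>c * real n * sqrt (1 - p n)\<rfloor>} \<le> \<epsilon>"
    if reg: "edge_prob_regime D p" for p :: "nat \<Rightarrow> real" and I :: "nat \<Rightarrow> nat"
  proof -
    have p01: "0 \<le> p n" "p n \<le> 1" for n using reg by (auto simp: edge_prob_regime_def)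
    have nq: "filterlim (\<lambda>n. real n ^ 2 * (1 - p n)) at_top sequentially"
      using reg by (auto simp: edge_prob_regime_def)
    obtain e where e: "e \<longlonglongrightarrow> 0" and ev: "\<forall>\<^sub>F n in sequentially. 1 - p n \<le> (D + e n) / real n"
      using reg by (auto simp: edge_prob_regime_def)
    define z where "z n = real n * sqrt (1 - p n)" for n
    have zsq: "z n = sqrt (real n ^ 2 * (1 - p n))" for n
      unfolding z_def using p01[of n] by (simp add: real_sqrt_mult)
    have zlim: "filterlim z at_top sequentially"
      unfolding zsq by (rule filterlim_compose[OF sqrt_at_top nq])
    define N0 where "N0 = max (max (2 * (D+1)) (8 / \<beta>)) (32 * (D+1) / (\<epsilon> * \<beta>^2))"
    define Z0 where "Z0 = max (4 / (\<sigma> * \<beta>)) (64 / (\<sigma> * \<beta> * \<epsilon>))"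
    have E1: "\<forall>\<^sub>F n in sequentially. real n ^ 2 * (1 - p n) \<ge> 1" using nq by (simp add: filterlim_at_top)
    have E3: "\<forall>\<^sub>F n in sequentially. e n < 1" using order_tendstoD(2)[OF e, of 1] by simp
    have E4: "\<forall>\<^sub>F n in sequentially. real n \<ge> N0"
      using filterlim_real_sequentially by (simp add: filterlim_at_top)
    have E5: "\<forall>\<^sub>F n in sequentially. z n \<ge> Z0" using zlim by (simp add: filterlim_at_top)
    show ?thesis using E1 ev E3 E4 E5
    proof eventually_elim
      case (elim n)
      have n1: "real n \<ge> 2 * (D+1)" using elim(4) by (simp add: N0_def)
      have npos: "real n > 0" using n1 D by (smt (verit))
      have q0: "0 < 1 - p n"
      proof (rule ccontr)
        assume "\<not> ?thesis"
        then have "real n ^ 2 * (1 - p n) \<le> 0" by (simp add: mult_nonneg_nonpos)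
        then show False using elim(1) by simp
      qed
      have qD: "(1 - p n) * real n \<le> D + 1"
      proof -
        have "(1 - p n) * real n \<le> ((D + e n) / real n) * real n"
          using elim(2) npos by (intro mult_right_mono) auto
        also have "\<dots> = D + e n" using npos by simp
        finally show ?thesis using elim(3) by simp
      qed
      show ?case
        by (rule part2_n[OF D \<epsilon> \<beta>_def \<sigma>_def c_def q0 p01(2) qD])
           (use elim(4) elim(5) in \<open>simp_all add: N0_def Z0_def z_def\<close>)
    qed
  qed
  show ?thesis
  proof (intro exI[of _ c] conjI allI impI c0)
    fix p :: "nat \<Rightarrow> real" and I :: "nat \<Rightarrow> nat"
    assume reg: "edge_prob_regime D p"
    define \<delta> where "\<delta> n = max 0 (chi_prob n (p n) {I n .. I n + nat \<lfloor>c * real n * sqrt (1 - p n)\<rfloor>} - \<epsilon>)" for n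
    have "\<forall>\<^sub>F n in sequentially. \<delta> n = 0" using main[OF reg, of I]
      by eventually_elim (simp add: \<delta>_def)
    then have "\<delta> \<longlonglongrightarrow> 0" by (rule tendsto_eventually)
    moreover have "\<forall>n. chi_prob n (p n) {I n .. I n + nat \<lfloor>c * real n * sqrt (1 - p n)\<rfloor>} \<le> \<epsilon> + \<delta> n"
    proof
      fix n
      have "chi_prob n (p n) {I n .. I n + nat \<lfloor>c * real n * sqrt (1 - p n)\<rfloor>} - \<epsilon> \<le> \<delta> n"
        unfolding \<delta>_def by (rule max.cobounded2)
      then show "chi_prob n (p n) {I n .. I n + nat \<lfloor>c * real n * sqrt (1 - p n)\<rfloor>} \<le> \<epsilon> + \<delta> n" by simp
    qed
    ultimately show "\<exists>\<delta> :: nat \<Rightarrow> real. \<delta> \<longlonglongrightarrow> 0 \<and>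
           (\<forall>n. chi_prob n (p n) {I n .. I n + nat \<lfloor>c * real n * sqrt (1 - p n)\<rfloor>} \<le> \<epsilon> + \<delta> n)" by blast
  qed
qed

theorem theorem9:
  fixes D \<epsilon> :: real
  assumes "0 < D" and "0 < \<epsilon>"
  shows
    "(\<forall>(p :: nat \<Rightarrow> real) (\<omega> :: nat \<Rightarrow> real).
        edge_prob_regime D p \<longrightarrow> filterlim \<omega> at_top sequentially \<longrightarrow>
        (\<exists>I :: nat \<Rightarrow> nat.
           (\<lambda>n. chi_prob n (p n)
                  {I n .. I n + nat \<lfloor>\<omega> n * real n * sqrt (1 - p n)\<rfloor>}) \<longlonglongrightarrow> 1))
     \<and>
     (\<exists>c > 0. \<forall>p :: nat \<Rightarrow> real. edge_prob_regime D p \<longrightarrow>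
        (\<forall>I :: nat \<Rightarrow> nat. \<exists>\<delta> :: nat \<Rightarrow> real. \<delta> \<longlonglongrightarrow> 0 \<and>
           (\<forall>n. chi_prob n (p n)
                  {I n .. I n + nat \<lfloor>c * real n * sqrt (1 - p n)\<rfloor>} \<le> \<epsilon> + \<delta> n)))"
  using part1 part2[OF assms] by blast


end
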